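(* Let $d>K\ge1$, $\mathbf Q\in\mathrm{St}(d,K)$, $\lambda_1>\dots>\lambda_K>0$, $\boldsymbol\Theta=\mathrm{diag}(\sqrt{\lambda_1},\dots,\sqrt{\lambda_K})$, $a_1>\dots>a_K>0$, $g(\mathbf X)=\mathrm{tr}(\mathbf X^\top\mathbf Q\boldsymbol\Theta^2\mathbf Q^\top\mathbf X\,\mathrm{diag}(a_1,\dots,a_K))$. Let $\delta_3\in(0,\tfrac{\sqrt2}{2})$ and $\eta>0$ be such that $d_F(\mathbf X,\mathbf Q)\le\eta\|\mathrm{grad}\,g(\mathbf X)\|_F$ for all $\mathbf X\in\mathrm{St}(d,K)$ with $d_F(\mathbf X,\mathbf Q)\le\delta_3$. Then there exists $\beta_1\in(0,\tfrac23\delta_3)$ such that $$g(\mathbf Q)-g(\mathbf X)\ge\frac{1}{4\eta}d_F^2(\mathbf X,\mathbf Q)\quad\text{for all }\mathbf X\in\mathrm{St}(d,K)\text{ with }d_F(\mathbf X,\mathbf Q)\le\beta_1.$$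
   Context: $\mathrm{St}(d,K)=\{\mathbf X\in\mathbb R^{d\times K}:\mathbf X^\top\mathbf X=\mathbf I_K\}$. $d_F(\mathbf X,\mathbf Q)=\min_{\mathbf q\in\{1,-1\}^K}\|\mathbf X-\mathbf Q\,\mathrm{diag}(\mathbf q)\|_F$. $\nabla g(\mathbf X)=2\mathbf Q\boldsymbol\Theta^2\mathbf Q^\top\mathbf X\,\mathrm{diag}(a_1,\dots,a_K)$ is the Euclidean gradient and $\mathrm{grad}\,g(\mathbf X)=(\mathbf I_d-\tfrac12\mathbf X\mathbf X^\top)(\nabla g(\mathbf X)-\mathbf X\nabla g(\mathbf X)^\top\mathbf X)$. (Such $\delta_3,\eta$ are known to exist.) *)

theory Defs
  imports "Jordan_Normal_Form.Matrix"
begin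

definition mat_trace :: "real mat \<Rightarrow> real" where
  "mat_trace A = (\<Sum>i<dim_row A. A $$ (i, i))"

definition frob :: "real mat \<Rightarrow> real" where
  "frob A = sqrt (\<Sum>i<dim_row A. \<Sum>j<dim_col A. (A $$ (i, j))\<^sup>2)"

definition stiefel :: "nat \<Rightarrow> nat \<Rightarrow> real mat set" where
  "stiefel d K = {X. X \<in> carrier_mat d K \<and> transpose_mat X * X = 1\<^sub>m K}"

definition dF :: "nat \<Rightarrow> real mat \<Rightarrow> real mat \<Rightarrow> real" where
  "dF K X Q = Min {frob (X - Q * mat_diag K (\<lambda>i. q ! i)) | q. q \<in> lists {1, -1} \<and> length q = K}"

definition Theta :: "nat \<Rightarrow> (nat \<Rightarrow> real) \<Rightarrow> real mat" where
  "Theta K lam = mat_diag K (\<lambda>i. sqrt (lam i))"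

definition gfun :: "nat \<Rightarrow> real mat \<Rightarrow> (nat \<Rightarrow> real) \<Rightarrow> (nat \<Rightarrow> real) \<Rightarrow> real mat \<Rightarrow> real" where
  "gfun K Q lam a X = mat_trace (transpose_mat X * Q * (Theta K lam * Theta K lam)
       * transpose_mat Q * X * mat_diag K a)"

definition egrad :: "nat \<Rightarrow> real mat \<Rightarrow> (nat \<Rightarrow> real) \<Rightarrow> (nat \<Rightarrow> real) \<Rightarrow> real mat \<Rightarrow> real mat" where
  "egrad K Q lam a X = 2 \<cdot>\<^sub>m (Q * (Theta K lam * Theta K lam) * transpose_mat Q * X * mat_diag K a)"

definition rgrad :: "nat \<Rightarrow> nat \<Rightarrow> real mat \<Rightarrow> (nat \<Rightarrow> real) \<Rightarrow> (nat \<Rightarrow> real) \<Rightarrow> real mat \<Rightarrow> real mat" where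
  "rgrad d K Q lam a X =
     (1\<^sub>m d - (1/2) \<cdot>\<^sub>m (X * transpose_mat X)) *
     (egrad K Q lam a X - X * transpose_mat (egrad K Q lam a X) * X)"

end

theory Submission
  imports Defs
begin

lemma cm: "dim_row (A::'a mat) = n \<Longrightarrow> dim_col A = m \<Longrightarrow> A \<in> carrier_mat n m"
  unfolding carrier_mat_def by simp

lemma massoc: "dim_col (A::real mat) = dim_row B \<Longrightarrow> dim_col B = dim_row C \<Longrightarrow> A * B * C = A * (B * C)"
proof -
  assume h: "dim_col (A::real mat) = dim_row B" "dim_col B = dim_row C"
  show ?thesis by (rule assoc_mult_mat[OF carrier_mat_triv cm cm]) (use h in simp_all)
qed
lemma mdistl: "dim_col (A::real mat) = dim_row B \<Longrightarrow> dim_row B = dim_row C \<Longrightarrow> dim_col B = dim_col C \<Longrightarrow> A * (B + C) = A * B + A * C"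
proof -
  assume h: "dim_col (A::real mat) = dim_row B" "dim_row B = dim_row C" "dim_col B = dim_col C"
  show ?thesis by (rule mult_add_distrib_mat[OF carrier_mat_triv cm cm]) (use h in simp_all)
qed
lemma mdistr: "dim_col (A::real mat) = dim_row C \<Longrightarrow> dim_row A = dim_row B \<Longrightarrow> dim_col A = dim_col B \<Longrightarrow> (A + B) * C = A * C + B * C"
proof -
  assume h: "dim_col (A::real mat) = dim_row C" "dim_row A = dim_row B" "dim_col A = dim_col B"
  show ?thesis by (rule add_mult_distrib_mat[OF carrier_mat_triv cm cm]) (use h in simp_all)
qed
lemma mdistl_minus: "dim_col (A::real mat) = dim_row B \<Longrightarrow> dim_row B = dim_row C \<Longrightarrow> dim_col B = dim_col C \<Longrightarrow> A * (B - C) = A * B - A * C"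
proof -
  assume h: "dim_col (A::real mat) = dim_row B" "dim_row B = dim_row C" "dim_col B = dim_col C"
  show ?thesis by (rule mult_minus_distrib_mat[OF carrier_mat_triv cm cm]) (use h in simp_all)
qed
lemma mdistr_minus: "dim_col (A::real mat) = dim_row C \<Longrightarrow> dim_row A = dim_row B \<Longrightarrow> dim_col A = dim_col B \<Longrightarrow> (A - B) * C = A * C - B * C"
proof -
  assume h: "dim_col (A::real mat) = dim_row C" "dim_row A = dim_row B" "dim_col A = dim_col B"
  show ?thesis by (rule minus_mult_distrib_mat[OF carrier_mat_triv cm cm]) (use h in simp_all)
qed
lemma msmultl: "dim_col (A::real mat) = dim_row B \<Longrightarrow> A * (k \<cdot>\<^sub>m B) = k \<cdot>\<^sub>m (A * B)"
proof -
  assume h: "dim_col (A::real mat) = dim_row B"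
  show ?thesis by (rule mult_smult_distrib[OF carrier_mat_triv cm]) (use h in simp_all)
qed
lemma msmultr: "dim_col (A::real mat) = dim_row B \<Longrightarrow> (k \<cdot>\<^sub>m A) * B = k \<cdot>\<^sub>m (A * B)"
proof -
  assume h: "dim_col (A::real mat) = dim_row B"
  show ?thesis by (rule mult_smult_assoc_mat[OF carrier_mat_triv cm]) (use h in simp_all)
qed
lemma mtrans_mult: "dim_col (A::real mat) = dim_row B \<Longrightarrow> transpose_mat (A * B) = transpose_mat B * transpose_mat A"
proof -
  assume h: "dim_col (A::real mat) = dim_row B"
  show ?thesis by (rule transpose_mult[OF carrier_mat_triv cm]) (use h in simp_all)
qed
lemma mtrans_add: "dim_row (A::real mat) = dim_row B \<Longrightarrow> dim_col A = dim_col B \<Longrightarrow> transpose_mat (A + B) = transpose_mat A + transpose_mat B"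
  by (rule eq_matI) simp_all
lemma mtrans_minus: "dim_row (A::real mat) = dim_row B \<Longrightarrow> dim_col A = dim_col B \<Longrightarrow> transpose_mat (A - B) = transpose_mat A - transpose_mat B"
  by (rule eq_matI) simp_all
lemma mtrans_smult: "transpose_mat (k \<cdot>\<^sub>m (A::real mat)) = k \<cdot>\<^sub>m transpose_mat A"
  by (rule eq_matI) simp_all
lemma mone_l: "dim_row (A::real mat) = n \<Longrightarrow> 1\<^sub>m n * A = A" by simp
lemma mone_r: "dim_col (A::real mat) = n \<Longrightarrow> A * 1\<^sub>m n = A" by simp


lemma mat_diag_dims[simp]: "dim_row (mat_diag n f) = n" "dim_col (mat_diag n f) = n"
  by (simp_all add: mat_diag_def)

lemma madd0r: "dim_row (A::real mat) = n \<Longrightarrow> dim_col A = m \<Longrightarrow> A + 0\<^sub>m n m = A"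
  by (rule eq_matI) auto
lemma madd0l: "dim_row (A::real mat) = n \<Longrightarrow> dim_col A = m \<Longrightarrow> 0\<^sub>m n m + A = A"
  by (rule eq_matI) auto
lemma mzero_l: "dim_row (A::real mat) = n \<Longrightarrow> 0\<^sub>m k n * A = 0\<^sub>m k (dim_col A)"
  by (rule eq_matI) (auto simp: scalar_prod_def)
lemma mzero_r: "dim_col (A::real mat) = n \<Longrightarrow> A * 0\<^sub>m n k = 0\<^sub>m (dim_row A) k"
  by (rule eq_matI) (auto simp: scalar_prod_def)

lemma frob_sq: "(frob M)\<^sup>2 = (\<Sum>i<dim_row M. \<Sum>j<dim_col M. (M $$ (i, j))\<^sup>2)"
  unfolding frob_def by (rule real_sqrt_pow2) (intro sum_nonneg, simp)


lemma mult_entry': "i < dim_row A \<Longrightarrow> j < dim_col B \<Longrightarrow> dim_col A = dim_row B \<Longrightarrow> (A * B) $$ (i, j) = (\<Sum>p<dim_col A. A $$ (i, p) * B $$ (p, j))"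
  by (auto simp: scalar_prod_def atLeast0LessThan intro!: sum.cong)

lemma tt_diag: "j < dim_col (M::real mat) \<Longrightarrow> (transpose_mat M * M) $$ (j, j) = (\<Sum>i<dim_row M. (M $$ (i, j))\<^sup>2)"
  by (simp add: scalar_prod_def atLeast0LessThan, rule sum.cong, simp_all add: power2_eq_square)

lemma frob_sq_tt: "(frob (M::real mat))\<^sup>2 = (\<Sum>j<dim_col M. (transpose_mat M * M) $$ (j, j))"
proof -
  have "(\<Sum>j<dim_col M. (transpose_mat M * M) $$ (j, j)) = (\<Sum>j<dim_col M. \<Sum>i<dim_row M. (M $$ (i, j))\<^sup>2)"
    by (rule sum.cong) (simp_all only: tt_diag lessThan_iff)
  also have "\<dots> = (\<Sum>i<dim_row M. \<Sum>j<dim_col M. (M $$ (i, j))\<^sup>2)" by (rule sum.swap)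
  finally show ?thesis unfolding frob_sq by simp
qed

lemma frob_nonneg: "0 \<le> frob M" unfolding frob_def by (simp add: sum_nonneg)

lemma frob_orth:
  fixes Q v N n :: "real mat"
  assumes Q: "dim_row Q = d" "dim_col Q = K" and v: "dim_row v = d" "dim_col v = 1"
    and N: "dim_row N = K" "dim_col N = m" and n: "dim_row n = 1" "dim_col n = m"
    and QtQ: "transpose_mat Q * Q = 1\<^sub>m K" and Qtv: "transpose_mat Q * v = 0\<^sub>m K 1"
    and vtv: "transpose_mat v * v = 1\<^sub>m 1"
  shows "(frob (Q * N + v * n))\<^sup>2 = (frob N)\<^sup>2 + (frob n)\<^sup>2"
proof -
  have vtQ: "transpose_mat v * Q = 0\<^sub>m 1 K"
  proof -
    have "transpose_mat v * Q = transpose_mat (transpose_mat Q * v)"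
      using Q v by (simp add: mtrans_mult)
    also have "\<dots> = 0\<^sub>m 1 K" using Qtv by (simp add: zero_transpose_mat)
    finally show ?thesis .
  qed
  have "transpose_mat (Q * N + v * n) * (Q * N + v * n)
      = (transpose_mat N * (transpose_mat Q * Q) * N + transpose_mat n * (transpose_mat v * Q) * N)
      + (transpose_mat N * (transpose_mat Q * v) * n + transpose_mat n * (transpose_mat v * v) * n)"
    using Q v N n by (simp add: mtrans_add mtrans_mult mdistl mdistr massoc)
  also have "\<dots> = transpose_mat N * N + transpose_mat n * n"
    using Q v N n by (simp add: QtQ Qtv vtQ vtv mzero_l mzero_r madd0l madd0r)
  finally have e: "transpose_mat (Q * N + v * n) * (Q * N + v * n) = transpose_mat N * N + transpose_mat n * n" .
  show ?thesis
    unfolding frob_sq_tt e using Q v N n by (simp add: sum.distrib)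
qed

lemma frob_isom:
  fixes Q N :: "real mat"
  assumes Q: "dim_row Q = d" "dim_col Q = K" and N: "dim_row N = K"
    and QtQ: "transpose_mat Q * Q = 1\<^sub>m K"
  shows "frob (Q * N) = frob N"
proof -
  have "transpose_mat (Q * N) * (Q * N) = transpose_mat N * (transpose_mat Q * Q) * N"
    using Q N by (simp add: mtrans_mult massoc)
  also have "\<dots> = transpose_mat N * N" using Q N QtQ by simp
  finally have e: "transpose_mat (Q * N) * (Q * N) = transpose_mat N * N" .
  have "(frob (Q * N))\<^sup>2 = (frob N)\<^sup>2" unfolding frob_sq_tt[of "Q * N"] frob_sq_tt[of N] e using N by simp
  then show ?thesis using frob_nonneg[of N] frob_nonneg[of "Q * N"] by (simp add: power2_eq_iff_nonneg)
qed

lemma one_entry: "i < n \<Longrightarrow> j < n \<Longrightarrow> (1\<^sub>m n :: real mat) $$ (i, j) = (if i = j then 1 else 0)"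
  by simp

lemma col_norm:
  assumes "dim_col (X::real mat) = K" "transpose_mat X * X = 1\<^sub>m K" "k < K"
  shows "(\<Sum>i<dim_row X. (X $$ (i, k))\<^sup>2) = 1"
proof -
  have "(transpose_mat X * X) $$ (k, k) = 1" using assms by simp
  then show ?thesis using tt_diag[of k X] assms by simp
qed

lemma frob_sign_sq:
  fixes X Q :: "real mat"
  assumes X: "dim_row X = d" "dim_col X = K" "transpose_mat X * X = 1\<^sub>m K"
    and Q: "dim_row Q = d" "dim_col Q = K" "transpose_mat Q * Q = 1\<^sub>m K"
    and q: "length q = K" "set q \<subseteq> {1, -1}"
  shows "(frob (X - Q * mat_diag K (\<lambda>i. q ! i)))\<^sup>2 = (\<Sum>k<K. 2 - 2 * (q ! k) * (transpose_mat Q * X) $$ (k, k))"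
proof -
  have QD: "Q * mat_diag K (\<lambda>i. q ! i) = mat d K (\<lambda>(i, j). Q $$ (i, j) * q ! j)"
    using mat_diag_mult_right[OF cm[OF Q(1,2)]] .
  have "(frob (X - Q * mat_diag K (\<lambda>i. q ! i)))\<^sup>2 = (\<Sum>i<d. \<Sum>k<K. (X $$ (i, k) - Q $$ (i, k) * q ! k)\<^sup>2)"
    unfolding frob_sq QD using X by simp
  also have "\<dots> = (\<Sum>k<K. \<Sum>i<d. (X $$ (i, k) - Q $$ (i, k) * q ! k)\<^sup>2)" by (rule sum.swap)
  also have "\<dots> = (\<Sum>k<K. 2 - 2 * (q ! k) * (transpose_mat Q * X) $$ (k, k))"
  proof (rule sum.cong[OF refl])
    fix k assume k: "k \<in> {..<K}"
    have qk: "(q ! k)\<^sup>2 = 1"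
    proof -
      have "q ! k \<in> set q" using k q(1) by simp
      then have "q ! k \<in> {1, -1}" using q(2) by blast
      then show ?thesis by auto
    qed
    have sx: "(\<Sum>i<d. (X $$ (i, k))\<^sup>2) = 1" using col_norm[of X K k] X k by simp
    have sq: "(\<Sum>i<d. (Q $$ (i, k))\<^sup>2) = 1" using col_norm[of Q K k] Q k by simp
    have b: "(transpose_mat Q * X) $$ (k, k) = (\<Sum>i<d. Q $$ (i, k) * X $$ (i, k))"
      using X Q k by (subst mult_entry') (auto intro!: sum.cong)
    have "(\<Sum>i<d. (X $$ (i, k) - Q $$ (i, k) * q ! k)\<^sup>2)
       = (\<Sum>i<d. (X $$ (i, k))\<^sup>2) - 2 * q ! k * (\<Sum>i<d. Q $$ (i, k) * X $$ (i, k)) + (q ! k)\<^sup>2 * (\<Sum>i<d. (Q $$ (i, k))\<^sup>2)"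
    proof -
      have "(\<Sum>i<d. (X $$ (i, k) - Q $$ (i, k) * q ! k)\<^sup>2)
         = (\<Sum>i<d. (X $$ (i, k))\<^sup>2 - 2 * q ! k * (Q $$ (i, k) * X $$ (i, k)) + (q ! k)\<^sup>2 * (Q $$ (i, k))\<^sup>2)"
        by (rule sum.cong[OF refl]) (simp add: power2_eq_square algebra_simps)
      also have "\<dots> = (\<Sum>i<d. (X $$ (i, k))\<^sup>2) - (\<Sum>i<d. 2 * q ! k * (Q $$ (i, k) * X $$ (i, k))) + (\<Sum>i<d. (q ! k)\<^sup>2 * (Q $$ (i, k))\<^sup>2)"
        by (simp only: sum.distrib sum_subtractf)
      finally show ?thesis by (simp only: sum_distrib_left[symmetric])
    qed
    then show "(\<Sum>i<d. (X $$ (i, k) - Q $$ (i, k) * q ! k)\<^sup>2) = 2 - 2 * q ! k * (transpose_mat Q * X) $$ (k, k)"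
      using qk sx sq b by simp
  qed
  finally show ?thesis .
qed

lemma stiefelD: "X \<in> stiefel d K \<Longrightarrow> dim_row X = d \<and> dim_col X = K \<and> transpose_mat X * X = 1\<^sub>m K"
  unfolding stiefel_def carrier_mat_def by auto

lemma dF_sq:
  assumes X: "X \<in> stiefel d K" and Q: "Q \<in> stiefel d K"
  shows "(dF K X Q)\<^sup>2 = (\<Sum>k<K. 2 - 2 * \<bar>(transpose_mat Q * X) $$ (k, k)\<bar>)"
proof -
  let ?B = "transpose_mat Q * X"
  let ?f = "\<lambda>q. frob (X - Q * mat_diag K (\<lambda>i. q ! i))"
  let ?L = "{q. set q \<subseteq> {1, -1::real} \<and> length q = K}"
  have S: "{frob (X - Q * mat_diag K (\<lambda>i. q ! i)) | q. q \<in> lists {1, -1} \<and> length q = K} = ?f ` ?L"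
    by (auto simp: in_lists_conv_set)
  have fin: "finite (?f ` ?L)" using finite_lists_length_eq[of "{1, -1::real}" K] by simp
  have ne: "replicate K 1 \<in> ?L" by auto
  have dFe: "dF K X Q = Min (?f ` ?L)" unfolding dF_def S ..
  have XX: "dim_row X = d" "dim_col X = K" "transpose_mat X * X = 1\<^sub>m K" using stiefelD[OF X] by auto
  have QQ: "dim_row Q = d" "dim_col Q = K" "transpose_mat Q * Q = 1\<^sub>m K" using stiefelD[OF Q] by auto
  define q0 where "q0 = map (\<lambda>k. if 0 \<le> ?B $$ (k, k) then 1 else -1::real) [0..<K]"
  have q0L: "q0 \<in> ?L" unfolding q0_def by auto
  have q0v: "\<And>k. k < K \<Longrightarrow> q0 ! k * ?B $$ (k, k) = \<bar>?B $$ (k, k)\<bar>"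
    unfolding q0_def by auto
  have "Min (?f ` ?L) \<in> ?f ` ?L" using fin ne by (intro Min_in) auto
  then obtain q where qL: "q \<in> ?L" and qe: "dF K X Q = ?f q" using dFe by auto
  have le1: "(\<Sum>k<K. 2 - 2 * \<bar>?B $$ (k, k)\<bar>) \<le> (dF K X Q)\<^sup>2"
  proof -
    have "(dF K X Q)\<^sup>2 = (\<Sum>k<K. 2 - 2 * (q ! k) * ?B $$ (k, k))"
      unfolding qe using frob_sign_sq[OF XX QQ, of q] qL by auto
    moreover have "(\<Sum>k<K. 2 - 2 * \<bar>?B $$ (k, k)\<bar>) \<le> (\<Sum>k<K. 2 - 2 * (q ! k) * ?B $$ (k, k))"
    proof (rule sum_mono)
      fix k assume k: "k \<in> {..<K}"
      have "q ! k \<in> set q" using k qL by simp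
      then have "q ! k \<in> {1, -1}" using qL by blast
      then show "2 - 2 * \<bar>?B $$ (k, k)\<bar> \<le> 2 - 2 * (q ! k) * ?B $$ (k, k)" by auto
    qed
    ultimately show ?thesis by simp
  qed
  have le2: "(dF K X Q)\<^sup>2 \<le> (\<Sum>k<K. 2 - 2 * \<bar>?B $$ (k, k)\<bar>)"
  proof -
    have m: "dF K X Q \<le> ?f q0" unfolding dFe using fin q0L by (intro Min_le) auto
    have nn: "0 \<le> dF K X Q" unfolding qe by (rule frob_nonneg)
    have "(dF K X Q)\<^sup>2 \<le> (?f q0)\<^sup>2" using m nn by (intro power_mono) auto
    also have "\<dots> = (\<Sum>k<K. 2 - 2 * (q0 ! k) * ?B $$ (k, k))"
      using frob_sign_sq[OF XX QQ, of q0] q0L by auto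
    also have "\<dots> = (\<Sum>k<K. 2 - 2 * \<bar>?B $$ (k, k)\<bar>)"
      by (rule sum.cong) (auto simp: q0v mult.assoc)
    finally show ?thesis .
  qed
  show ?thesis using le1 le2 by linarith
qed

lemma Theta_sq: "Theta K lam * Theta K lam = mat_diag K (\<lambda>i. sqrt (lam i) * sqrt (lam i))"
  unfolding Theta_def by simp

lemma gfun_formula:
  fixes Q X :: "real mat"
  assumes Q: "dim_row Q = d" "dim_col Q = K" and X: "dim_row X = d" "dim_col X = K"
    and lam: "\<forall>i<K. 0 < lam i"
  shows "gfun K Q lam a X = (\<Sum>k<K. a k * (\<Sum>i<K. lam i * ((transpose_mat Q * X) $$ (i, k))\<^sup>2))"
proof -
  define B where "B = transpose_mat Q * X"
  define L where "L = Theta K lam * Theta K lam"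
  have Ld: "L = mat_diag K (\<lambda>i. sqrt (lam i) * sqrt (lam i))" unfolding L_def Theta_sq ..
  have Bd: "dim_row B = K" "dim_col B = K" unfolding B_def using Q X by auto
  have XQ: "transpose_mat X * Q = transpose_mat B"
    unfolding B_def using Q X by (simp add: mtrans_mult)
  have e1: "transpose_mat X * Q * L * transpose_mat Q * X = transpose_mat B * L * B"
  proof -
    have "transpose_mat X * Q * L * transpose_mat Q * X = (transpose_mat X * Q) * L * (transpose_mat Q * X)"
      using Q X by (simp add: massoc Ld)
    then show ?thesis unfolding XQ B_def .
  qed
  have BL: "transpose_mat B * L = mat K K (\<lambda>(i, j). transpose_mat B $$ (i, j) * (sqrt (lam j) * sqrt (lam j)))"
  proof -
    have "transpose_mat B \<in> carrier_mat K K" using Bd by (intro cm) simp_all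
    then show ?thesis unfolding Ld by (rule mat_diag_mult_right)
  qed
  have M: "transpose_mat B * L * B * mat_diag K a = mat K K (\<lambda>(i, j). (transpose_mat B * L * B) $$ (i, j) * a j)"
  proof -
    have "transpose_mat B * L * B \<in> carrier_mat K K" using Bd BL by (intro cm) simp_all
    then show ?thesis by (rule mat_diag_mult_right)
  qed
  have "gfun K Q lam a X = mat_trace (transpose_mat B * L * B * mat_diag K a)"
    unfolding gfun_def e1[unfolded L_def] L_def ..
  also have "\<dots> = (\<Sum>k<K. (transpose_mat B * L * B) $$ (k, k) * a k)"
    unfolding mat_trace_def M by simp
  also have "\<dots> = (\<Sum>k<K. a k * (\<Sum>i<K. lam i * (B $$ (i, k))\<^sup>2))"
  proof (rule sum.cong[OF refl])
    fix k assume k: "k \<in> {..<K}"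
    have "(transpose_mat B * L * B) $$ (k, k) = (\<Sum>p<K. (transpose_mat B * L) $$ (k, p) * B $$ (p, k))"
      using k Bd BL by (subst mult_entry') auto
    also have "\<dots> = (\<Sum>p<K. lam p * (B $$ (p, k))\<^sup>2)"
    proof (rule sum.cong[OF refl])
      fix p assume p: "p \<in> {..<K}"
      have "sqrt (lam p) * sqrt (lam p) = lam p" using lam p by (simp add: less_imp_le)
      then show "(transpose_mat B * L) $$ (k, p) * B $$ (p, k) = lam p * (B $$ (p, k))\<^sup>2"
        unfolding BL using p k Bd by (simp add: power2_eq_square)
    qed
    finally show "(transpose_mat B * L * B) $$ (k, k) * a k = a k * (\<Sum>i<K. lam i * (B $$ (i, k))\<^sup>2)"
      by simp
  qed
  finally show ?thesis unfolding B_def .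
qed

lemma bessel:
  fixes Y Z :: "real mat"
  assumes Y: "dim_row Y = n" "dim_col Y = K" "transpose_mat Y * Y = 1\<^sub>m K"
    and Z: "dim_row Z = n" "dim_col Z = m" and j: "j < m"
  shows "(\<Sum>k<K. ((transpose_mat Y * Z) $$ (k, j))\<^sup>2) \<le> (\<Sum>i<n. (Z $$ (i, j))\<^sup>2)"
proof -
  define W where "W = transpose_mat Y * Z"
  have Wd: "dim_row W = K" "dim_col W = m" unfolding W_def using Y Z by auto
  define M where "M = Z - Y * W"
  have ZY: "transpose_mat Z * Y = transpose_mat W" unfolding W_def using Y Z by (simp add: mtrans_mult)
  have "transpose_mat M * M = transpose_mat Z * Z - transpose_mat W * (transpose_mat Y * Z) - (transpose_mat Z * Y * W - transpose_mat W * (transpose_mat Y * Y) * W)"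
    unfolding M_def using Y(1,2) Z Wd
    by (simp add: mtrans_minus mtrans_mult mdistl_minus mdistr_minus massoc)
  also have "\<dots> = transpose_mat Z * Z - transpose_mat W * W - (transpose_mat W * W - transpose_mat W * W)"
  proof -
    have "transpose_mat Y * Z = W" unfolding W_def ..
    moreover have "transpose_mat W * (transpose_mat Y * Y) * W = transpose_mat W * W" using Y(3) Wd by simp
    ultimately show ?thesis unfolding ZY by simp
  qed
  finally have e: "transpose_mat M * M = transpose_mat Z * Z - transpose_mat W * W - (transpose_mat W * W - transpose_mat W * W)" .
  have Md: "dim_col M = m" unfolding M_def using Z Wd by simp
  have "0 \<le> (transpose_mat M * M) $$ (j, j)" using tt_diag[of j M] Md j by (simp add: sum_nonneg)
  also have "\<dots> = (transpose_mat Z * Z) $$ (j, j) - (transpose_mat W * W) $$ (j, j)"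
    unfolding e using j Z Wd by simp
  finally show ?thesis using tt_diag[of j Z] tt_diag[of j W] Z Wd j unfolding W_def by simp
qed

lemma lp_ineq:
  fixes a lam :: "nat \<Rightarrow> real" and P :: "nat \<Rightarrow> nat \<Rightarrow> real" and m :: real and K :: nat
  assumes K: "1 \<le> K"
    and lamdec: "\<forall>i j. i < j \<and> j < K \<longrightarrow> lam j < lam i"
    and adec: "\<forall>i j. i < j \<and> j < K \<longrightarrow> a j < a i"
    and lampos: "\<forall>i<K. 0 < lam i" and apos: "\<forall>i<K. 0 < a i"
    and m0: "0 \<le> m" and mK: "m \<le> a (K - 1) * lam (K - 1)"
    and mD: "\<forall>j. j + 1 < K \<longrightarrow> 2 * m \<le> (a j - a (j + 1)) * (lam j - lam (j + 1))"
    and P0: "\<forall>i<K. \<forall>k<K. 0 \<le> P i k"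
    and row: "\<forall>i<K. (\<Sum>k<K. P i k) \<le> 1"
    and col: "\<forall>k<K. (\<Sum>i<K. P i k) \<le> 1"
  shows "m * (\<Sum>k<K. (1 - P k k)) \<le> (\<Sum>k<K. a k * lam k) - (\<Sum>k<K. a k * (\<Sum>i<K. lam i * P i k))"
proof -
  define t where "t j = (a j + a (Suc j)) * (lam j - lam (Suc j)) / 2" for j
  define u where "u i = (\<Sum>j\<in>{i..<K-1}. t j)" for i
  define w where "w k = a k * lam k - m - u k" for k
  have lamle: "lam k \<le> lam i" if "i \<le> k" "k < K" for i k
    using lamdec that by (cases "i = k") (auto intro: less_imp_le)
  have ale: "a k \<le> a i" if "i \<le> k" "k < K" for i k
    using adec that by (cases "i = k") (auto intro: less_imp_le)
  have u_step: "u i = t i + u (Suc i)" if "i < K - 1" for i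
    unfolding u_def using that by (simp add: sum.atLeast_Suc_lessThan)
  have u_last: "u (K - 1) = 0" unfolding u_def by simp
  have t_low: "a (Suc j) * (lam j - lam (Suc j)) + m \<le> t j" if "j + 1 < K" for j
  proof -
    have "t j = a (Suc j) * (lam j - lam (Suc j)) + (a j - a (j + 1)) * (lam j - lam (j + 1)) / 2"
    proof -
      have "2 * t j = 2 * (a (Suc j) * (lam j - lam (Suc j)) + (a j - a (j + 1)) * (lam j - lam (j + 1)) / 2)"
        unfolding t_def by (simp add: field_simps; simp add: algebra_simps)
      then show ?thesis by simp
    qed
    then show ?thesis using mD that by auto
  qed
  have t_up: "t j \<le> a j * (lam j - lam (Suc j)) - m" if "j + 1 < K" for j
  proof -
    have "t j = a j * (lam j - lam (Suc j)) - (a j - a (j + 1)) * (lam j - lam (j + 1)) / 2"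
    proof -
      have "2 * t j = 2 * (a j * (lam j - lam (Suc j)) - (a j - a (j + 1)) * (lam j - lam (j + 1)) / 2)"
        unfolding t_def by (simp add: field_simps; simp add: algebra_simps)
      then show ?thesis by simp
    qed
    then show ?thesis using mD that by auto
  qed
  have t_nonneg: "0 \<le> t j" if "j + 1 < K" for j
  proof -
    have "0 < a j" "0 < a (Suc j)" using apos that by auto
    then have "0 \<le> a j + a (Suc j)" by simp
    moreover have "0 \<le> lam j - lam (Suc j)" using lamle[of j "Suc j"] that by auto
    ultimately show ?thesis unfolding t_def by simp
  qed
  have u_nonneg: "0 \<le> u i" for i
    unfolding u_def by (rule sum_nonneg) (use t_nonneg in auto)
  have lower: "\<forall>n. i + n < K \<longrightarrow> a (i + n) * (lam i - lam (i + n)) + m * n \<le> u i - u (i + n)" for i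
  proof
    fix n show "i + n < K \<longrightarrow> a (i + n) * (lam i - lam (i + n)) + m * n \<le> u i - u (i + n)"
    proof (induction n)
      case 0 then show ?case by simp
    next
      case (Suc n)
      show ?case
      proof
        assume h: "i + Suc n < K"
        let ?j = "i + n"
        have IH: "a ?j * (lam i - lam ?j) + m * n \<le> u i - u ?j" using Suc h by simp
        have us: "u ?j = t ?j + u (Suc ?j)" using u_step[of ?j] h by simp
        have tl: "a (Suc ?j) * (lam ?j - lam (Suc ?j)) + m \<le> t ?j" using t_low[of ?j] h by simp
        have m1: "a (Suc ?j) * (lam i - lam ?j) \<le> a ?j * (lam i - lam ?j)"
          using ale[of ?j "Suc ?j"] lamle[of i ?j] h by (intro mult_right_mono) auto
        have e: "a (Suc ?j) * (lam i - lam (Suc ?j)) = a (Suc ?j) * (lam i - lam ?j) + a (Suc ?j) * (lam ?j - lam (Suc ?j))"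
          by (simp add: algebra_simps)
        show "a (i + Suc n) * (lam i - lam (i + Suc n)) + m * real (Suc n) \<le> u i - u (i + Suc n)"
          using IH us tl m1 e by (simp add: algebra_simps)
      qed
    qed
  qed
  have upper: "\<forall>n. k + n < K \<longrightarrow> u k - u (k + n) \<le> a k * (lam k - lam (k + n)) - m * n" for k
  proof
    fix n show "k + n < K \<longrightarrow> u k - u (k + n) \<le> a k * (lam k - lam (k + n)) - m * n"
    proof (induction n)
      case 0 then show ?case by simp
    next
      case (Suc n)
      show ?case
      proof
        assume h: "k + Suc n < K"
        let ?j = "k + n"
        have IH: "u k - u ?j \<le> a k * (lam k - lam ?j) - m * n" using Suc h by simp
        have us: "u ?j = t ?j + u (Suc ?j)" using u_step[of ?j] h by simp
        have tu: "t ?j \<le> a ?j * (lam ?j - lam (Suc ?j)) - m" using t_up[of ?j] h by simp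
        have m1: "a ?j * (lam ?j - lam (Suc ?j)) \<le> a k * (lam ?j - lam (Suc ?j))"
          using ale[of k ?j] lamle[of ?j "Suc ?j"] h by (intro mult_right_mono) auto
        have e: "a k * (lam k - lam (Suc ?j)) = a k * (lam k - lam ?j) + a k * (lam ?j - lam (Suc ?j))"
          by (simp add: algebra_simps)
        show "u k - u (k + Suc n) \<le> a k * (lam k - lam (k + Suc n)) - m * real (Suc n)"
          using IH us tu m1 e by (simp add: algebra_simps)
      qed
    qed
  qed
  have cert: "a k * lam i - (if i = k then m else 0) \<le> u i + w k" if "i < K" "k < K" for i k
  proof (cases "i = k")
    case True then show ?thesis unfolding w_def by simp
  next
    case False
    show ?thesis
    proof (cases "i < k")
      case True
      have "a k * (lam i - lam k) + m * real (k - i) \<le> u i - u k"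
        using lower[of i] that True by (metis le_add_diff_inverse less_imp_le)
      moreover have "(1::real) \<le> real (k - i)" using True by simp
      then have "m * 1 \<le> m * real (k - i)" using m0 by (intro mult_left_mono) auto
      then have "m \<le> m * real (k - i)" by simp
      moreover have "a k * (lam i - lam k) = a k * lam i - a k * lam k" by (simp add: algebra_simps)
      moreover have "(if i = k then m else 0) = 0" using False by simp
      ultimately show ?thesis unfolding w_def by linarith
    next
      case False2: False
      then have ki: "k < i" using False by simp
      have "u k - u i \<le> a k * (lam k - lam i) - m * real (i - k)"
        using upper[of k] that ki by (metis le_add_diff_inverse less_imp_le)
      moreover have "(1::real) \<le> real (i - k)" using ki by simp
      then have "m * 1 \<le> m * real (i - k)" using m0 by (intro mult_left_mono) auto
      then have "m \<le> m * real (i - k)" by simp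
      moreover have "a k * (lam k - lam i) = a k * lam k - a k * lam i" by (simp add: algebra_simps)
      moreover have "(if i = k then m else 0) = 0" using False by simp
      ultimately show ?thesis unfolding w_def by linarith
    qed
  qed
  have w_nonneg: "0 \<le> w k" if "k < K" for k
  proof -
    have eqk: "k + (K - 1 - k) = K - 1" using that by simp
    have h: "u k - u (k + (K - 1 - k)) \<le> a k * (lam k - lam (k + (K - 1 - k))) - m * real (K - 1 - k)"
      by (rule upper[of k, rule_format]) (use that in simp)
    have "0 \<le> m * real (K - 1 - k)" using m0 by simp
    then have "u k \<le> a k * (lam k - lam (K - 1))" using h[unfolded eqk] u_last by linarith
    moreover have "a (K - 1) * lam (K - 1) \<le> a k * lam (K - 1)"
    proof -
      have "0 < lam (K - 1)" using lampos K by simp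
      moreover have "a (K - 1) \<le> a k" using ale[of k "K - 1"] that by simp
      ultimately show ?thesis by (intro mult_right_mono) auto
    qed
    ultimately show ?thesis unfolding w_def using mK by (simp add: algebra_simps)
  qed
  have "(\<Sum>k<K. \<Sum>i<K. (a k * lam i - (if i = k then m else 0)) * P i k) \<le> (\<Sum>k<K. \<Sum>i<K. (u i + w k) * P i k)"
    by (intro sum_mono mult_right_mono) (use cert P0 in auto)
  also have "\<dots> = (\<Sum>i<K. u i * (\<Sum>k<K. P i k)) + (\<Sum>k<K. w k * (\<Sum>i<K. P i k))"
  proof -
    have "(\<Sum>k<K. \<Sum>i<K. (u i + w k) * P i k) = (\<Sum>k<K. \<Sum>i<K. u i * P i k) + (\<Sum>k<K. \<Sum>i<K. w k * P i k)"
      by (simp add: distrib_right sum.distrib)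
    also have "(\<Sum>k<K. \<Sum>i<K. u i * P i k) = (\<Sum>i<K. \<Sum>k<K. u i * P i k)" by (rule sum.swap)
    also have "\<dots> = (\<Sum>i<K. u i * (\<Sum>k<K. P i k))" by (simp add: sum_distrib_left)
    also have "(\<Sum>k<K. \<Sum>i<K. w k * P i k) = (\<Sum>k<K. w k * (\<Sum>i<K. P i k))" by (simp add: sum_distrib_left)
    finally show ?thesis .
  qed
  also have "\<dots> \<le> (\<Sum>i<K. u i) + (\<Sum>k<K. w k)"
    by (intro add_mono sum_mono mult_left_le) (use row col u_nonneg w_nonneg P0 in \<open>auto intro: sum_nonneg\<close>)
  also have "\<dots> = (\<Sum>k<K. a k * lam k - m)" unfolding w_def by (simp add: sum.distrib sum_subtractf)
  finally have main: "(\<Sum>k<K. \<Sum>i<K. (a k * lam i - (if i = k then m else 0)) * P i k) \<le> (\<Sum>k<K. a k * lam k - m)" .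
  have "(\<Sum>k<K. \<Sum>i<K. (a k * lam i - (if i = k then m else 0)) * P i k)
      = (\<Sum>k<K. a k * (\<Sum>i<K. lam i * P i k)) - m * (\<Sum>k<K. P k k)"
  proof -
    have d: "(\<Sum>i<K. (if i = k then m else 0) * P i k) = m * P k k" if k: "k < K" for k
    proof -
      have "(\<Sum>i<K. (if i = k then m else 0) * P i k) = (\<Sum>i<K. if i = k then m * P k k else 0)"
        by (rule sum.cong) auto
      also have "\<dots> = m * P k k" using k by simp
      finally show ?thesis .
    qed
    have "(\<Sum>k<K. \<Sum>i<K. (a k * lam i - (if i = k then m else 0)) * P i k)
        = (\<Sum>k<K. (\<Sum>i<K. a k * lam i * P i k) - (\<Sum>i<K. (if i = k then m else 0) * P i k))"
      by (simp add: left_diff_distrib sum_subtractf)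
    also have "\<dots> = (\<Sum>k<K. a k * (\<Sum>i<K. lam i * P i k) - m * P k k)"
      by (rule sum.cong) (simp_all add: d sum_distrib_left mult.assoc)
    also have "\<dots> = (\<Sum>k<K. a k * (\<Sum>i<K. lam i * P i k)) - m * (\<Sum>k<K. P k k)"
      by (simp add: sum_subtractf sum_distrib_left)
    finally show ?thesis .
  qed
  then show ?thesis using main by (simp add: algebra_simps sum_subtractf sum_distrib_left)
qed

lemma qg:
  fixes d K :: nat and Q X :: "real mat" and lam a :: "nat \<Rightarrow> real" and \<eta> :: real
  assumes K: "1 \<le> K" and Q: "Q \<in> stiefel d K" and X: "X \<in> stiefel d K"
    and lamdec: "\<forall>i j. i < j \<and> j < K \<longrightarrow> lam j < lam i"
    and lampos: "\<forall>i<K. 0 < lam i"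
    and adec: "\<forall>i j. i < j \<and> j < K \<longrightarrow> a j < a i"
    and apos: "\<forall>i<K. 0 < a i"
    and eta: "0 < \<eta>"
    and hK: "1 \<le> 2 * \<eta> * (a (K - 1) * lam (K - 1))"
    and hD: "\<forall>j. j + 1 < K \<longrightarrow> 1 \<le> \<eta> * ((a j - a (j + 1)) * (lam j - lam (j + 1)))"
  shows "1 / (4 * \<eta>) * (dF K X Q)\<^sup>2 \<le> gfun K Q lam a Q - gfun K Q lam a X"
proof -
  have XX: "dim_row X = d" "dim_col X = K" "transpose_mat X * X = 1\<^sub>m K" using stiefelD[OF X] by auto
  have QQ: "dim_row Q = d" "dim_col Q = K" "transpose_mat Q * Q = 1\<^sub>m K" using stiefelD[OF Q] by auto
  define B where "B = transpose_mat Q * X"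
  define P where "P i k = (B $$ (i, k))\<^sup>2" for i k
  have gQ: "gfun K Q lam a Q = (\<Sum>k<K. a k * lam k)"
  proof -
    have "gfun K Q lam a Q = (\<Sum>k<K. a k * (\<Sum>i<K. lam i * ((1\<^sub>m K :: real mat) $$ (i, k))\<^sup>2))"
      using gfun_formula[OF QQ(1,2) QQ(1,2) lampos] QQ(3) by simp
    also have "\<dots> = (\<Sum>k<K. a k * lam k)"
    proof (rule sum.cong[OF refl])
      fix k assume k: "k \<in> {..<K}"
      have "(\<Sum>i<K. lam i * ((1\<^sub>m K :: real mat) $$ (i, k))\<^sup>2) = (\<Sum>i<K. if i = k then lam k else 0)"
        by (rule sum.cong) (use k in auto)
      then show "a k * (\<Sum>i<K. lam i * ((1\<^sub>m K :: real mat) $$ (i, k))\<^sup>2) = a k * lam k" using k by simp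
    qed
    finally show ?thesis .
  qed
  have gX: "gfun K Q lam a X = (\<Sum>k<K. a k * (\<Sum>i<K. lam i * P i k))"
    unfolding P_def B_def by (rule gfun_formula[OF QQ(1,2) XX(1,2) lampos])
  have Bd: "dim_row B = K" "dim_col B = K" unfolding B_def using QQ XX by auto
  have XQ: "transpose_mat X * Q = transpose_mat B" unfolding B_def using QQ XX by (simp add: mtrans_mult)
  have row: "\<forall>i<K. (\<Sum>k<K. P i k) \<le> 1"
  proof (intro allI impI)
    fix i assume i: "i < K"
    have "(\<Sum>k<K. ((transpose_mat X * Q) $$ (k, i))\<^sup>2) \<le> (\<Sum>p<d. (Q $$ (p, i))\<^sup>2)"
      by (rule bessel[OF XX QQ(1,2) i])
    also have "\<dots> = 1" using col_norm[of Q K i] QQ i by simp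
    finally show "(\<Sum>k<K. P i k) \<le> 1" unfolding XQ P_def using Bd i by simp
  qed
  have col: "\<forall>k<K. (\<Sum>i<K. P i k) \<le> 1"
  proof (intro allI impI)
    fix k assume k: "k < K"
    have "(\<Sum>i<K. ((transpose_mat Q * X) $$ (i, k))\<^sup>2) \<le> (\<Sum>p<d. (X $$ (p, k))\<^sup>2)"
      by (rule bessel[OF QQ XX(1,2) k])
    also have "\<dots> = 1" using col_norm[of X K k] XX k by simp
    finally show "(\<Sum>i<K. P i k) \<le> 1" unfolding P_def B_def .
  qed
  have P0: "\<forall>i<K. \<forall>k<K. 0 \<le> P i k" unfolding P_def by simp
  define m where "m = 1 / (2 * \<eta>)"
  have m0: "0 \<le> m" unfolding m_def using eta by simp
  have mK: "m \<le> a (K - 1) * lam (K - 1)"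
    unfolding m_def using hK eta by (simp add: field_simps)
  have mD: "\<forall>j. j + 1 < K \<longrightarrow> 2 * m \<le> (a j - a (j + 1)) * (lam j - lam (j + 1))"
    unfolding m_def using hD eta by (simp add: field_simps)
  have lp: "m * (\<Sum>k<K. (1 - P k k)) \<le> (\<Sum>k<K. a k * lam k) - (\<Sum>k<K. a k * (\<Sum>i<K. lam i * P i k))"
    by (rule lp_ineq[OF K lamdec adec lampos apos m0 mK mD P0 row col])
  have dF2: "(dF K X Q)\<^sup>2 \<le> 2 * (\<Sum>k<K. (1 - P k k))"
  proof -
    have "(dF K X Q)\<^sup>2 = (\<Sum>k<K. 2 - 2 * \<bar>B $$ (k, k)\<bar>)" unfolding B_def by (rule dF_sq[OF X Q])
    also have "\<dots> \<le> (\<Sum>k<K. 2 * (1 - P k k))"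
    proof (rule sum_mono)
      fix k assume k: "k \<in> {..<K}"
      have "P k k \<le> (\<Sum>i<K. P i k)" using P0 k by (intro member_le_sum) auto
      then have "P k k \<le> 1" using col k by force
      then have "(B $$ (k, k))\<^sup>2 \<le> 1" unfolding P_def .
      then have "\<bar>B $$ (k, k)\<bar> \<le> 1" by (simp add: abs_square_le_1)
      then have "(B $$ (k, k))\<^sup>2 \<le> \<bar>B $$ (k, k)\<bar>"
        by (metis abs_ge_zero mult_left_le_one_le power2_abs power2_eq_square)
      then show "2 - 2 * \<bar>B $$ (k, k)\<bar> \<le> 2 * (1 - P k k)" unfolding P_def by simp
    qed
    also have "\<dots> = 2 * (\<Sum>k<K. (1 - P k k))" by (simp add: sum_distrib_left)
    finally show ?thesis .
  qed
  have "1 / (4 * \<eta>) * (dF K X Q)\<^sup>2 \<le> 1 / (4 * \<eta>) * (2 * (\<Sum>k<K. (1 - P k k)))"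
    using dF2 eta by (intro mult_left_mono) auto
  also have "\<dots> = m * (\<Sum>k<K. (1 - P k k))" unfolding m_def using eta by (simp add: field_simps)
  finally show ?thesis using lp gQ gX by simp
qed

lemma Theta_sq_lam:
  assumes lam: "\<forall>i<K. 0 < lam i"
  shows "Theta K lam * Theta K lam = mat_diag K lam"
  unfolding Theta_sq by (rule eq_matI) (use lam in \<open>auto simp: mat_diag_def less_imp_le\<close>)

lemma transpose_diag: "transpose_mat (mat_diag n f) = (mat_diag n f :: real mat)"
  by (rule eq_matI) (auto simp: mat_diag_def)

lemma rgrad_struct:
  fixes Q v B r X :: "real mat" and lam a :: "nat \<Rightarrow> real" and d K :: nat
  assumes Q: "dim_row Q = d" "dim_col Q = K" and v: "dim_row v = d" "dim_col v = 1"
    and B: "dim_row B = K" "dim_col B = K" and r: "dim_row r = 1" "dim_col r = K"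
    and QtQ: "transpose_mat Q * Q = 1\<^sub>m K" and Qtv: "transpose_mat Q * v = 0\<^sub>m K 1"
    and vtv: "transpose_mat v * v = 1\<^sub>m 1"
    and lam: "\<forall>i<K. 0 < lam i"
    and Xdef: "X = Q * B + v * r"
  defines "L \<equiv> mat_diag K lam" and "A \<equiv> mat_diag K a"
  defines "C \<equiv> A * transpose_mat B * L"
  defines "N \<equiv> L * B * A - B * (C * B)" and "n \<equiv> r * (C * B)"
  defines "W \<equiv> transpose_mat B * N - transpose_mat r * n"
  shows "rgrad d K Q lam a X = Q * (2 \<cdot>\<^sub>m N - B * W) + v * ((-2) \<cdot>\<^sub>m n - r * W)"
proof -
  have Ld: "dim_row L = K" "dim_col L = K" and Ad: "dim_row A = K" "dim_col A = K"
    unfolding L_def A_def by simp_all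
  have Cd: "dim_row C = K" "dim_col C = K" unfolding C_def using Ad Ld B by simp_all
  have Nd: "dim_row N = K" "dim_col N = K" unfolding N_def using Ad Ld B Cd by simp_all
  have nd: "dim_row n = 1" "dim_col n = K" unfolding n_def using r Cd B by simp_all
  have Wd: "dim_row W = K" "dim_col W = K" unfolding W_def using B Nd r nd by simp_all
  have Xd: "dim_row X = d" "dim_col X = K" unfolding Xdef using Q B v r by simp_all
  have vtQ: "transpose_mat v * Q = 0\<^sub>m 1 K"
  proof -
    have "transpose_mat v * Q = transpose_mat (transpose_mat Q * v)"
      using Q v by (simp add: mtrans_mult)
    also have "\<dots> = 0\<^sub>m 1 K" using Qtv by (simp add: zero_transpose_mat)
    finally show ?thesis .
  qed
  have f1: "transpose_mat Q * X = B"
  proof -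
    have "transpose_mat Q * X = (transpose_mat Q * Q) * B + (transpose_mat Q * v) * r"
      unfolding Xdef using Q v B r by (simp add: mdistl massoc)
    then show ?thesis using B r by (simp add: QtQ Qtv mzero_l madd0r)
  qed
  have f2: "transpose_mat v * X = r"
  proof -
    have "transpose_mat v * X = (transpose_mat v * Q) * B + (transpose_mat v * v) * r"
      unfolding Xdef using Q v B r by (simp add: mdistl massoc)
    then show ?thesis using B r by (simp add: vtv vtQ mzero_l madd0l)
  qed
  have f3: "transpose_mat X * Q = transpose_mat B"
    using arg_cong[OF f1, of transpose_mat] Q Xd by (simp add: mtrans_mult)
  have f4: "transpose_mat X * v = transpose_mat r"
    using arg_cong[OF f2, of transpose_mat] v Xd by (simp add: mtrans_mult)
  have LL: "Theta K lam * Theta K lam = L" unfolding L_def by (rule Theta_sq_lam[OF lam])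
  have E: "egrad K Q lam a X = 2 \<cdot>\<^sub>m (Q * (L * B * A))"
  proof -
    have "Q * L * transpose_mat Q * X * A = Q * L * (transpose_mat Q * X) * A"
      using Q Xd Ld Ad by (simp add: massoc)
    also have "\<dots> = Q * (L * B * A)" unfolding f1 using Q Ld B Ad by (simp add: massoc)
    finally show ?thesis unfolding egrad_def LL A_def by simp
  qed
  have LBAt: "transpose_mat (L * B * A) = C"
    unfolding C_def using Ld B Ad
    by (simp add: mtrans_mult massoc L_def A_def transpose_diag)
  have Et: "transpose_mat (egrad K Q lam a X) = 2 \<cdot>\<^sub>m (C * transpose_mat Q)"
    unfolding E mtrans_smult using Q Ld B Ad by (subst mtrans_mult) (simp_all add: LBAt)
  have XEX: "X * transpose_mat (egrad K Q lam a X) * X = 2 \<cdot>\<^sub>m (Q * (B * (C * B)) + v * n)"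
  proof -
    have "X * transpose_mat (egrad K Q lam a X) * X = 2 \<cdot>\<^sub>m (X * C * (transpose_mat Q * X))"
      unfolding Et using Xd Cd Q by (simp add: msmultl msmultr massoc)
    also have "\<dots> = 2 \<cdot>\<^sub>m (X * (C * B))" unfolding f1 using Xd Cd B by (simp add: massoc)
    also have "X * (C * B) = Q * (B * (C * B)) + v * n"
      unfolding Xdef n_def using Q B v r Cd by (simp add: mdistr massoc)
    finally show ?thesis .
  qed
  define H where "H = Q * N - v * n"
  have Hd: "dim_row H = d" "dim_col H = K" unfolding H_def using v nd by simp_all
  have EH: "egrad K Q lam a X - X * transpose_mat (egrad K Q lam a X) * X = 2 \<cdot>\<^sub>m H"
  proof -
    have QN: "Q * N = Q * (L * B * A) - Q * (B * (C * B))"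
      unfolding N_def using Q Ld B Ad Cd by (subst mdistl_minus) simp_all
    show ?thesis unfolding XEX unfolding E H_def QN
      by (rule eq_matI) (use Q v B Ld Ad Cd nd in \<open>simp_all add: algebra_simps\<close>)
  qed
  have XtH: "transpose_mat X * H = W"
  proof -
    have "transpose_mat X * H = (transpose_mat X * Q) * N - (transpose_mat X * v) * n"
      unfolding H_def using Xd Q v Nd nd by (simp add: mdistl_minus massoc)
    then show ?thesis unfolding f3 f4 W_def .
  qed
  have XW: "X * W = Q * (B * W) + v * (r * W)"
    unfolding Xdef using Q B v r Wd by (simp add: mdistr massoc)
  have "rgrad d K Q lam a X = (1\<^sub>m d - (1/2) \<cdot>\<^sub>m (X * transpose_mat X)) * (2 \<cdot>\<^sub>m H)"
    unfolding rgrad_def EH ..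
  also have "\<dots> = 1\<^sub>m d * (2 \<cdot>\<^sub>m H) - (1/2) \<cdot>\<^sub>m (X * transpose_mat X) * (2 \<cdot>\<^sub>m H)"
    using Xd Hd by (subst mdistr_minus) simp_all
  also have "\<dots> = 2 \<cdot>\<^sub>m H - X * (transpose_mat X * H)"
  proof -
    have "(1/2) \<cdot>\<^sub>m (X * transpose_mat X) * (2 \<cdot>\<^sub>m H) = 2 \<cdot>\<^sub>m ((1/2) \<cdot>\<^sub>m (X * (transpose_mat X * H)))"
      using Xd Hd by (simp add: msmultl msmultr massoc)
    also have "\<dots> = X * (transpose_mat X * H)" by (rule eq_matI) simp_all
    finally show ?thesis using Hd by simp
  qed
  also have "\<dots> = 2 \<cdot>\<^sub>m (Q * N - v * n) - (Q * (B * W) + v * (r * W))"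
    unfolding XtH XW unfolding H_def ..
  also have "\<dots> = Q * (2 \<cdot>\<^sub>m N - B * W) + v * ((-2) \<cdot>\<^sub>m n - r * W)"
  proof -
    have a1: "Q * (2 \<cdot>\<^sub>m N - B * W) = 2 \<cdot>\<^sub>m (Q * N) - Q * (B * W)"
      using Q Nd B Wd by (simp add: mdistl_minus msmultl)
    have a2: "v * ((-2) \<cdot>\<^sub>m n - r * W) = (-2) \<cdot>\<^sub>m (v * n) - v * (r * W)"
      using v nd r Wd by (simp add: mdistl_minus msmultl)
    show ?thesis unfolding a1 a2
      by (rule eq_matI) (use Q v B Nd nd Wd r in \<open>simp_all add: algebra_simps\<close>)
  qed
  finally show ?thesis .
qed

lemma exists_v:
  fixes Q :: "real mat"
  assumes Q: "dim_row Q = d" "dim_col Q = K" and QtQ: "transpose_mat Q * Q = 1\<^sub>m K" and Kd: "K < d"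
  shows "\<exists>v. dim_row v = d \<and> dim_col v = 1 \<and> transpose_mat Q * v = 0\<^sub>m K 1 \<and> transpose_mat v * v = 1\<^sub>m 1"
proof -
  define Pm where "Pm = 1\<^sub>m d - Q * transpose_mat Q"
  have Pd: "dim_row Pm = d" "dim_col Pm = d" unfolding Pm_def using Q by simp_all
  have Pjj: "Pm $$ (j, j) = 1 - (\<Sum>k<K. (Q $$ (j, k))\<^sup>2)" if j: "j < d" for j
  proof -
    have "(Q * transpose_mat Q) $$ (j, j) = (\<Sum>k<K. Q $$ (j, k) * transpose_mat Q $$ (k, j))"
      using j Q by (subst mult_entry') simp_all
    also have "\<dots> = (\<Sum>k<K. (Q $$ (j, k))\<^sup>2)" by (rule sum.cong) (use j Q in \<open>simp_all add: power2_eq_square\<close>)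
    finally show ?thesis unfolding Pm_def using j Q by simp
  qed
  have "(\<Sum>j<d. \<Sum>k<K. (Q $$ (j, k))\<^sup>2) = (\<Sum>k<K. \<Sum>j<d. (Q $$ (j, k))\<^sup>2)" by (rule sum.swap)
  also have "\<dots> = (\<Sum>k<K. 1)" by (rule sum.cong) (use col_norm[of Q K] Q QtQ in auto)
  finally have sQ: "(\<Sum>j<d. \<Sum>k<K. (Q $$ (j, k))\<^sup>2) = real K" by simp
  have "(\<Sum>j<d. Pm $$ (j, j)) = (\<Sum>j<d. 1 - (\<Sum>k<K. (Q $$ (j, k))\<^sup>2))" by (rule sum.cong) (simp_all add: Pjj)
  also have "\<dots> = real d - real K" by (simp add: sum_subtractf sQ)
  finally have tr: "(\<Sum>j<d. Pm $$ (j, j)) = real d - real K" .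
  obtain j where j: "j < d" and pj: "0 < Pm $$ (j, j)"
  proof (rule ccontr)
    assume "\<not> ?thesis"
    then have "\<forall>j<d. Pm $$ (j, j) \<le> 0" using that by force
    then have "(\<Sum>j<d. Pm $$ (j, j)) \<le> 0" by (intro sum_nonpos) auto
    then show False using tr Kd by simp
  qed
  have QtP: "transpose_mat Q * Pm = 0\<^sub>m K d"
  proof -
    have "transpose_mat Q * Pm = transpose_mat Q * 1\<^sub>m d - (transpose_mat Q * Q) * transpose_mat Q"
      unfolding Pm_def using Q by (simp add: mdistl_minus massoc)
    also have "\<dots> = 0\<^sub>m K d" unfolding QtQ using Q by (intro eq_matI) simp_all
    finally show ?thesis .
  qed
  have PtP: "transpose_mat Pm * Pm = Pm"
  proof -
    have Pt: "transpose_mat Pm = Pm" unfolding Pm_def using Q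
      by (simp add: mtrans_minus mtrans_mult)
    have "Pm * Pm = (1\<^sub>m d - Q * transpose_mat Q) * Pm" by (simp only: Pm_def)
    also have "\<dots> = 1\<^sub>m d * Pm - Q * (transpose_mat Q * Pm)"
      using Q Pd by (simp add: mdistr_minus massoc)
    also have "\<dots> = Pm" unfolding QtP using Q Pd by (intro eq_matI) simp_all
    finally show ?thesis unfolding Pt .
  qed
  define e where "e = mat d 1 (\<lambda>(i, _). if i = j then 1 else (0::real))"
  define w where "w = Pm * e"
  have wd: "dim_row w = d" "dim_col w = 1" unfolding w_def e_def using Pd by simp_all
  have we: "w $$ (i, 0) = Pm $$ (i, j)" if i: "i < d" for i
  proof -
    have "w $$ (i, 0) = (\<Sum>p<d. Pm $$ (i, p) * e $$ (p, 0))"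
      unfolding w_def using i Pd by (subst mult_entry') (simp_all add: e_def)
    also have "\<dots> = (\<Sum>p<d. if p = j then Pm $$ (i, j) else 0)"
      by (rule sum.cong) (simp_all add: e_def)
    also have "\<dots> = Pm $$ (i, j)" using j by simp
    finally show ?thesis .
  qed
  have wtw: "(transpose_mat w * w) $$ (0, 0) = Pm $$ (j, j)"
  proof -
    have "(transpose_mat w * w) $$ (0, 0) = (\<Sum>i<d. (w $$ (i, 0))\<^sup>2)" using tt_diag[of 0 w] wd by simp
    also have "\<dots> = (\<Sum>i<d. (Pm $$ (i, j))\<^sup>2)" by (rule sum.cong) (simp_all add: we)
    also have "\<dots> = (transpose_mat Pm * Pm) $$ (j, j)" using tt_diag[of j Pm] Pd j by simp
    finally show ?thesis unfolding PtP .
  qed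
  have Qtw: "transpose_mat Q * w = 0\<^sub>m K 1"
  proof -
    have "transpose_mat Q * w = (transpose_mat Q * Pm) * e" unfolding w_def using Q Pd by (simp add: massoc e_def)
    then show ?thesis unfolding QtP e_def by (simp add: mzero_l)
  qed
  define v where "v = (1 / sqrt (Pm $$ (j, j))) \<cdot>\<^sub>m w"
  have vd: "dim_row v = d" "dim_col v = 1" unfolding v_def using wd by simp_all
  have "transpose_mat Q * v = 0\<^sub>m K 1" unfolding v_def using Q wd by (simp add: msmultl Qtw)
  moreover have "transpose_mat v * v = 1\<^sub>m 1"
  proof -
    have cc: "1 / sqrt (Pm $$ (j, j)) * (1 / sqrt (Pm $$ (j, j)) * Pm $$ (j, j)) = 1"
      using pj by (simp add: field_simps)
    have "transpose_mat v * v = (1 / sqrt (Pm $$ (j, j))) \<cdot>\<^sub>m ((1 / sqrt (Pm $$ (j, j))) \<cdot>\<^sub>m (transpose_mat w * w))"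
      unfolding v_def using wd by (simp add: mtrans_smult msmultl msmultr)
    also have "\<dots> = 1\<^sub>m 1"
    proof (rule eq_matI)
      fix i k assume "i < dim_row (1\<^sub>m 1 :: real mat)" "k < dim_col (1\<^sub>m 1 :: real mat)"
      then have "i = 0" "k = 0" by auto
      then show "((1 / sqrt (Pm $$ (j, j))) \<cdot>\<^sub>m ((1 / sqrt (Pm $$ (j, j))) \<cdot>\<^sub>m (transpose_mat w * w))) $$ (i, k) = (1\<^sub>m 1 :: real mat) $$ (i, k)"
        using wtw wd cc by simp
    qed (use wd in simp_all)
    finally show ?thesis .
  qed
  ultimately show ?thesis using vd by blast
qed

lemma orth_tt:
  fixes Q v N n :: "real mat"
  assumes Q: "dim_row Q = d" "dim_col Q = K" and v: "dim_row v = d" "dim_col v = 1"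
    and N: "dim_row N = K" "dim_col N = m" and n: "dim_row n = 1" "dim_col n = m"
    and QtQ: "transpose_mat Q * Q = 1\<^sub>m K" and Qtv: "transpose_mat Q * v = 0\<^sub>m K 1"
    and vtv: "transpose_mat v * v = 1\<^sub>m 1"
  shows "transpose_mat (Q * N + v * n) * (Q * N + v * n) = transpose_mat N * N + transpose_mat n * n"
proof -
  have vtQ: "transpose_mat v * Q = 0\<^sub>m 1 K"
  proof -
    have "transpose_mat v * Q = transpose_mat (transpose_mat Q * v)"
      using Q v by (simp add: mtrans_mult)
    also have "\<dots> = 0\<^sub>m 1 K" using Qtv by (simp add: zero_transpose_mat)
    finally show ?thesis .
  qed
  have "transpose_mat (Q * N + v * n) * (Q * N + v * n)
      = (transpose_mat N * (transpose_mat Q * Q) * N + transpose_mat n * (transpose_mat v * Q) * N)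
      + (transpose_mat N * (transpose_mat Q * v) * n + transpose_mat n * (transpose_mat v * v) * n)"
    using Q v N n by (simp add: mtrans_add mtrans_mult mdistl mdistr massoc)
  also have "\<dots> = transpose_mat N * N + transpose_mat n * n"
    using Q v N n by (simp add: QtQ Qtv vtQ vtv mzero_l mzero_r madd0l madd0r)
  finally show ?thesis .
qed

lemma struct_QtX:
  fixes Q v B r :: "real mat"
  assumes Q: "dim_row Q = d" "dim_col Q = K" and v: "dim_row v = d" "dim_col v = 1"
    and B: "dim_row B = K" "dim_col B = K" and r: "dim_row r = 1" "dim_col r = K"
    and QtQ: "transpose_mat Q * Q = 1\<^sub>m K" and Qtv: "transpose_mat Q * v = 0\<^sub>m K 1"
  shows "transpose_mat Q * (Q * B + v * r) = B"
proof -
  have "transpose_mat Q * (Q * B + v * r) = (transpose_mat Q * Q) * B + (transpose_mat Q * v) * r"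
    using Q v B r by (simp add: mdistl massoc)
  then show ?thesis using B r by (simp add: QtQ Qtv mzero_l madd0r)
qed

lemma sum_single:
  fixes j K :: nat
  assumes "j < K" "\<And>k. k < K \<Longrightarrow> k \<noteq> j \<Longrightarrow> f k = (0::real)"
  shows "(\<Sum>k<K. f k) = f j"
proof -
  have "(\<Sum>k<K. f k) = f j + (\<Sum>k\<in>{..<K} - {j}. f k)"
    using assms(1) by (subst sum.remove[of _ j]) auto
  also have "(\<Sum>k\<in>{..<K} - {j}. f k) = 0" by (rule sum.neutral) (use assms(2) in auto)
  finally show ?thesis by simp
qed

lemma drop_test:
  fixes Q v :: "real mat" and lam a :: "nat \<Rightarrow> real" and c s :: real
  assumes K: "1 \<le> K"
    and Q: "dim_row Q = d" "dim_col Q = K" and v: "dim_row v = d" "dim_col v = 1"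
    and QtQ: "transpose_mat Q * Q = 1\<^sub>m K" and Qtv: "transpose_mat Q * v = 0\<^sub>m K 1"
    and vtv: "transpose_mat v * v = 1\<^sub>m 1"
    and lam: "\<forall>i<K. 0 < lam i"
    and cs: "c\<^sup>2 + s\<^sup>2 = 1" and c0: "0 \<le> c" and s0: "0 \<le> s"
  defines "X \<equiv> Q * mat_diag K (\<lambda>k. if k = K - 1 then c else 1) + v * mat 1 K (\<lambda>(_, k). if k = K - 1 then s else 0)"
  shows "X \<in> stiefel d K" and "(dF K X Q)\<^sup>2 = 2 - 2 * c"
    and "(frob (rgrad d K Q lam a X))\<^sup>2 = (2 * a (K - 1) * lam (K - 1) * c * s)\<^sup>2"
proof -
  define b where "b k = (if k = K - 1 then c else 1)" for k
  define B where "B = mat_diag K b"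
  define r where "r = mat 1 K (\<lambda>(_, k). if k = K - 1 then s else (0::real))"
  have Xd: "X = Q * B + v * r" unfolding X_def B_def r_def b_def ..
  have Bd: "dim_row B = K" "dim_col B = K" unfolding B_def by simp_all
  have rd: "dim_row r = 1" "dim_col r = K" unfolding r_def by simp_all
  have XdR: "dim_row X = d" "dim_col X = K" unfolding Xd using Q v Bd rd by simp_all
  have ss: "s * s = 1 - c * c" using cs by (simp add: power2_eq_square algebra_simps)
  have BtB: "transpose_mat B * B = mat_diag K (\<lambda>k. b k * b k)" unfolding B_def transpose_diag by simp
  have rtr: "(transpose_mat r * r) $$ (i, k) = r $$ (0, i) * r $$ (0, k)" if "i < K" "k < K" for i k
    using that rd by (simp add: scalar_prod_def)
  have XtX: "transpose_mat X * X = 1\<^sub>m K"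
  proof -
    have "transpose_mat X * X = transpose_mat B * B + transpose_mat r * r"
      unfolding Xd by (rule orth_tt[OF Q v Bd rd QtQ Qtv vtv])
    also have "\<dots> = 1\<^sub>m K"
    proof (rule eq_matI)
      fix i k assume ik: "i < dim_row (1\<^sub>m K :: real mat)" "k < dim_col (1\<^sub>m K :: real mat)"
      then have i: "i < K" and k: "k < K" by auto
      show "(transpose_mat B * B + transpose_mat r * r) $$ (i, k) = (1\<^sub>m K :: real mat) $$ (i, k)"
        using i k rd Bd unfolding index_add_mat(1)[of i "transpose_mat r * r" k, simplified]
        by (auto simp: BtB r_def b_def mat_diag_def ss scalar_prod_def)
    qed (use Bd rd in simp_all)
    finally show ?thesis .
  qed
  show Xst: "X \<in> stiefel d K" unfolding stiefel_def using cm[OF XdR] XtX by blast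
  have Qst: "Q \<in> stiefel d K" unfolding stiefel_def using cm[OF Q] QtQ by blast
  have QtX: "transpose_mat Q * X = B" unfolding Xd by (rule struct_QtX[OF Q v Bd rd QtQ Qtv])
  have Bkk: "B $$ (k, k) = b k" if "k < K" for k unfolding B_def using that by (simp add: mat_diag_def)
  show "(dF K X Q)\<^sup>2 = 2 - 2 * c"
  proof -
    have "(dF K X Q)\<^sup>2 = (\<Sum>k<K. 2 - 2 * \<bar>B $$ (k, k)\<bar>)" using dF_sq[OF Xst Qst] unfolding QtX .
    also have "\<dots> = 2 - 2 * \<bar>B $$ (K - 1, K - 1)\<bar>"
      by (rule sum_single) (use K in \<open>auto simp: Bkk b_def\<close>)
    also have "\<dots> = 2 - 2 * c" using K c0 by (simp add: Bkk b_def)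
    finally show ?thesis .
  qed
  define L where "L = mat_diag K lam"
  define A where "A = mat_diag K a"
  define C where "C = A * transpose_mat B * L"
  define N where "N = L * B * A - B * (C * B)"
  define n where "n = r * (C * B)"
  define W where "W = transpose_mat B * N - transpose_mat r * n"
  have RG: "rgrad d K Q lam a X = Q * (2 \<cdot>\<^sub>m N - B * W) + v * ((-2) \<cdot>\<^sub>m n - r * W)"
    unfolding W_def N_def n_def C_def L_def A_def by (rule rgrad_struct[OF Q v Bd rd QtQ Qtv vtv lam Xd])
  define nd where "nd k = lam k * b k * a k - b k * (a k * b k * lam k * b k)" for k
  define cb where "cb k = a k * b k * lam k * b k" for k
  have CB: "C * B = mat_diag K cb"
    unfolding C_def A_def L_def B_def transpose_diag cb_def by (simp add: mult.assoc)
  have LBA: "L * B * A = mat_diag K (\<lambda>i. lam i * b i * a i)" by (simp add: L_def B_def A_def)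
  have BCB: "B * (C * B) = mat_diag K (\<lambda>i. b i * cb i)" unfolding CB unfolding B_def by simp
  have Nd: "N = mat_diag K nd"
    unfolding N_def LBA BCB nd_def cb_def
    by (rule eq_matI) (auto simp: mat_diag_def)
  have nent: "n $$ (0, k) = r $$ (0, k) * cb k" if "k < K" for k
  proof -
    have "n = mat 1 K (\<lambda>(i, j). r $$ (i, j) * cb j)"
      unfolding n_def CB by (rule mat_diag_mult_right[OF cm[OF rd]])
    then show ?thesis using that by simp
  qed
  have ndd: "dim_row n = 1" "dim_col n = K" unfolding n_def CB using rd by simp_all
  have W0: "W = 0\<^sub>m K K"
  proof (rule eq_matI)
    fix i k assume ik: "i < dim_row (0\<^sub>m K K :: real mat)" "k < dim_col (0\<^sub>m K K :: real mat)"
    then have i: "i < K" and k: "k < K" by auto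
    have BN: "(transpose_mat B * N) $$ (i, k) = (if i = k then b k * nd k else 0)"
      unfolding B_def transpose_diag Nd mat_diag_diag using i k by (simp add: mat_diag_def)
    have rn: "(transpose_mat r * n) $$ (i, k) = r $$ (0, i) * n $$ (0, k)"
      using i k rd ndd by (simp add: scalar_prod_def)
    have "(transpose_mat B * N) $$ (i, k) - (transpose_mat r * n) $$ (i, k) = 0"
      unfolding BN rn nent[OF k] using i k
      by (auto simp: r_def b_def nd_def cb_def ss algebra_simps)
    then show "W $$ (i, k) = (0\<^sub>m K K :: real mat) $$ (i, k)"
      unfolding W_def using i k Bd rd ndd Nd by simp
  qed (simp_all add: W_def Bd Nd rd ndd)
  have N'd: "dim_row (2 \<cdot>\<^sub>m N - B * W) = K" "dim_col (2 \<cdot>\<^sub>m N - B * W) = K"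
    using Bd W0 by simp_all
  have n'd: "dim_row ((-2) \<cdot>\<^sub>m n - r * W) = 1" "dim_col ((-2) \<cdot>\<^sub>m n - r * W) = K"
    using rd W0 by simp_all
  have fN: "(frob (2 \<cdot>\<^sub>m N - B * W))\<^sup>2 = (2 * nd (K - 1))\<^sup>2"
  proof -
    have e: "(2 \<cdot>\<^sub>m N - B * W) $$ (i, k) = (if i = k then 2 * nd k else 0)" if "i < K" "k < K" for i k
      using that Bd unfolding W0 Nd by (simp add: mat_diag_def)
    have "(frob (2 \<cdot>\<^sub>m N - B * W))\<^sup>2 = (\<Sum>i<K. \<Sum>k<K. (if i = k then 2 * nd k else 0)\<^sup>2)"
      unfolding frob_sq N'd by (intro sum.cong refl) (simp add: e)
    also have "\<dots> = (\<Sum>i<K. (2 * nd i)\<^sup>2)"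
      by (intro sum.cong refl, subst sum_single) auto
    also have "\<dots> = (2 * nd (K - 1))\<^sup>2"
      by (rule sum_single) (use K in \<open>auto simp: nd_def b_def\<close>)
    finally show ?thesis .
  qed
  have fn: "(frob ((-2) \<cdot>\<^sub>m n - r * W))\<^sup>2 = (2 * s * cb (K - 1))\<^sup>2"
  proof -
    have e: "((-2) \<cdot>\<^sub>m n - r * W) $$ (0, k) = (-2) * (r $$ (0, k) * cb k)" if "k < K" for k
      using that rd ndd nent[OF that] unfolding W0 by simp
    have "(frob ((-2) \<cdot>\<^sub>m n - r * W))\<^sup>2 = (\<Sum>k<K. ((-2) * (r $$ (0, k) * cb k))\<^sup>2)"
      unfolding frob_sq n'd by (simp add: e)
    also have "\<dots> = ((-2) * (r $$ (0, K - 1) * cb (K - 1)))\<^sup>2"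
      by (rule sum_single) (use K in \<open>auto simp: r_def\<close>)
    also have "\<dots> = (2 * s * cb (K - 1))\<^sup>2" using K by (simp add: r_def power2_eq_square)
    finally show ?thesis .
  qed
  have "(frob (rgrad d K Q lam a X))\<^sup>2 = (2 * nd (K - 1))\<^sup>2 + (2 * s * cb (K - 1))\<^sup>2"
    unfolding RG using frob_orth[OF Q v N'd n'd QtQ Qtv vtv] fN fn by simp
  also have "\<dots> = (2 * a (K - 1) * lam (K - 1) * c * s)\<^sup>2"
  proof -
    have "(2 * nd (K - 1))\<^sup>2 + (2 * s * cb (K - 1))\<^sup>2
        = (2 * (a (K - 1) * lam (K - 1)) * c * s)\<^sup>2 * (s\<^sup>2 + c\<^sup>2)"
    proof -
      have h1: "nd (K - 1) = a (K - 1) * lam (K - 1) * c * (s * s)"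
        unfolding nd_def b_def ss by (simp add: algebra_simps)
      have h2: "cb (K - 1) = a (K - 1) * lam (K - 1) * c * c"
        unfolding cb_def b_def by (simp add: algebra_simps)
      have gen: "(2 * (x * c * (s * s)))\<^sup>2 + (2 * s * (x * c * c))\<^sup>2 = (2 * x * c * s)\<^sup>2 * (s\<^sup>2 + c\<^sup>2)" for x :: real
        by (simp add: power2_eq_square algebra_simps)
      show ?thesis unfolding h1 h2 using gen[of "a (K - 1) * lam (K - 1)"] by (simp add: mult.assoc)
    qed
    then show ?thesis using cs by (simp add: add.commute mult.assoc)
  qed
  finally show "(frob (rgrad d K Q lam a X))\<^sup>2 = (2 * a (K - 1) * lam (K - 1) * c * s)\<^sup>2" .
qed

lemma sum3:
  fixes f :: "nat \<Rightarrow> real" and i j K :: nat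
  assumes "Suc j < K" "i < K" "\<And>p. p < K \<Longrightarrow> p \<noteq> i \<Longrightarrow> p \<noteq> j \<Longrightarrow> p \<noteq> Suc j \<Longrightarrow> f p = 0"
  shows "(\<Sum>p<K. f p) = (if i = j \<or> i = Suc j then 0 else f i) + f j + f (Suc j)"
proof -
  have fin: "finite {..<K}" by simp
  let ?T = "{j, Suc j} \<union> (if i = j \<or> i = Suc j then {} else {i})"
  have sub: "?T \<subseteq> {..<K}" using assms by auto
  have "(\<Sum>p<K. f p) = (\<Sum>p\<in>?T. f p)"
    by (rule sum.mono_neutral_right[OF fin sub]) (use assms in auto)
  also have "\<dots> = (if i = j \<or> i = Suc j then 0 else f i) + f j + f (Suc j)"
    by (cases "i = j \<or> i = Suc j") auto
  finally show ?thesis .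
qed

definition rot :: "nat \<Rightarrow> real \<Rightarrow> real \<Rightarrow> nat \<Rightarrow> nat \<Rightarrow> real" where
  "rot j c s p k = (if p = k then (if k = j \<or> k = Suc j then c else 1)
     else if p = Suc j \<and> k = j then s else if p = j \<and> k = Suc j then - s else 0)"

lemma rot_zero: "p \<noteq> i \<Longrightarrow> p \<noteq> j \<Longrightarrow> p \<noteq> Suc j \<Longrightarrow> rot j c s p i = 0"
  and rot_zero': "p \<noteq> i \<Longrightarrow> i \<noteq> j \<Longrightarrow> i \<noteq> Suc j \<Longrightarrow> rot j c s p i = 0"
  unfolding rot_def by auto

lemma rot_tt:
  assumes j: "Suc j < K" and i: "i < K" and k: "k < K" and cs: "c * c + s * s = 1"
  shows "(\<Sum>p<K. rot j c s p i * rot j c s p k) = (if i = k then 1 else 0)"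
  by (subst sum3[OF j i]) (auto simp: rot_zero rot_def cs algebra_simps)

lemma rot_t:
  assumes j: "Suc j < K" and i: "i < K" and k: "k < K" and cs: "c * c + s * s = 1"
  shows "(\<Sum>p<K. rot j c s i p * rot j c s k p) = (if i = k then 1 else 0)"
  by (subst sum3[OF j i]) (auto simp: rot_zero' rot_def cs algebra_simps)

lemma rot_S:
  assumes j: "Suc j < K" and i: "i < K" and k: "k < K" and ik: "i \<noteq> k"
  shows "(\<Sum>p<K. rot j c s p i * lam p * rot j c s p k) =
    (if (i = j \<and> k = Suc j) \<or> (i = Suc j \<and> k = j) then - (c * s * (lam j - lam (Suc j))) else 0)"
  by (subst sum3[OF j i]) (use ik in \<open>auto simp: rot_zero rot_def algebra_simps\<close>)

lemma rot_test:
  fixes Q v :: "real mat" and lam a :: "nat \<Rightarrow> real" and c s :: real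
  assumes j: "Suc j < K"
    and Q: "dim_row Q = d" "dim_col Q = K" and v: "dim_row v = d" "dim_col v = 1"
    and QtQ: "transpose_mat Q * Q = 1\<^sub>m K" and Qtv: "transpose_mat Q * v = 0\<^sub>m K 1"
    and vtv: "transpose_mat v * v = 1\<^sub>m 1"
    and lam: "\<forall>i<K. 0 < lam i"
    and cs: "c\<^sup>2 + s\<^sup>2 = 1" and c0: "0 \<le> c"
  defines "X \<equiv> Q * mat K K (\<lambda>(p, k). rot j c s p k) + v * 0\<^sub>m 1 K"
  shows "X \<in> stiefel d K" and "(dF K X Q)\<^sup>2 = 4 - 4 * c"
    and "(frob (rgrad d K Q lam a X))\<^sup>2 = 2 * (c * s * (lam j - lam (Suc j)) * (a j - a (Suc j)))\<^sup>2"
proof -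
  define R where "R = mat K K (\<lambda>(p, k). rot j c s p k)"
  define r where "r = (0\<^sub>m 1 K :: real mat)"
  have Xd: "X = Q * R + v * r" unfolding X_def R_def r_def ..
  have Rd: "dim_row R = K" "dim_col R = K" unfolding R_def by simp_all
  have rd: "dim_row r = 1" "dim_col r = K" unfolding r_def by simp_all
  have XdR: "dim_row X = d" "dim_col X = K" unfolding Xd using Q v Rd rd by simp_all
  have cs': "c * c + s * s = 1" using cs by (simp add: power2_eq_square)
  have RtR: "transpose_mat R * R = 1\<^sub>m K"
  proof (rule eq_matI)
    fix i k assume "i < dim_row (1\<^sub>m K :: real mat)" "k < dim_col (1\<^sub>m K :: real mat)"
    then have i: "i < K" and k: "k < K" by auto
    have "(transpose_mat R * R) $$ (i, k) = (\<Sum>p<K. transpose_mat R $$ (i, p) * R $$ (p, k))"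
      using i k Rd by (subst mult_entry') simp_all
    also have "\<dots> = (\<Sum>p<K. rot j c s p i * rot j c s p k)"
      by (rule sum.cong) (use i k in \<open>simp_all add: R_def\<close>)
    also have "\<dots> = (1\<^sub>m K :: real mat) $$ (i, k)" using rot_tt[OF j i k cs'] i k by simp
    finally show "(transpose_mat R * R) $$ (i, k) = (1\<^sub>m K :: real mat) $$ (i, k)" .
  qed (use Rd in simp_all)
  have RRt: "R * transpose_mat R = 1\<^sub>m K"
  proof (rule eq_matI)
    fix i k assume "i < dim_row (1\<^sub>m K :: real mat)" "k < dim_col (1\<^sub>m K :: real mat)"
    then have i: "i < K" and k: "k < K" by auto
    have "(R * transpose_mat R) $$ (i, k) = (\<Sum>p<K. R $$ (i, p) * transpose_mat R $$ (p, k))"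
      using i k Rd by (subst mult_entry') simp_all
    also have "\<dots> = (\<Sum>p<K. rot j c s i p * rot j c s k p)"
      by (rule sum.cong) (use i k in \<open>simp_all add: R_def\<close>)
    also have "\<dots> = (1\<^sub>m K :: real mat) $$ (i, k)" using rot_t[OF j i k cs'] i k by simp
    finally show "(R * transpose_mat R) $$ (i, k) = (1\<^sub>m K :: real mat) $$ (i, k)" .
  qed (use Rd in simp_all)
  have XtX: "transpose_mat X * X = 1\<^sub>m K"
  proof -
    have "transpose_mat X * X = transpose_mat R * R + transpose_mat r * r"
      unfolding Xd by (rule orth_tt[OF Q v Rd rd QtQ Qtv vtv])
    also have "\<dots> = 1\<^sub>m K" unfolding RtR r_def by (rule eq_matI) (simp_all add: scalar_prod_def)
    finally show ?thesis .
  qed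
  show Xst: "X \<in> stiefel d K" unfolding stiefel_def using cm[OF XdR] XtX by blast
  have Qst: "Q \<in> stiefel d K" unfolding stiefel_def using cm[OF Q] QtQ by blast
  have QtX: "transpose_mat Q * X = R" unfolding Xd by (rule struct_QtX[OF Q v Rd rd QtQ Qtv])
  show "(dF K X Q)\<^sup>2 = 4 - 4 * c"
  proof -
    have "(dF K X Q)\<^sup>2 = (\<Sum>k<K. 2 - 2 * \<bar>R $$ (k, k)\<bar>)" using dF_sq[OF Xst Qst] unfolding QtX .
    also have "\<dots> = (if j = j \<or> j = Suc j then 0 else 2 - 2 * \<bar>R $$ (j, j)\<bar>) + (2 - 2 * \<bar>R $$ (j, j)\<bar>) + (2 - 2 * \<bar>R $$ (Suc j, Suc j)\<bar>)"
      by (rule sum3[OF j]) (use j in \<open>auto simp: R_def rot_def\<close>)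
    also have "\<dots> = 4 - 4 * c" using j c0 by (simp add: R_def rot_def)
    finally show ?thesis .
  qed
  define L where "L = mat_diag K lam"
  define A where "A = mat_diag K a"
  define C where "C = A * transpose_mat R * L"
  define N where "N = L * R * A - R * (C * R)"
  define n where "n = r * (C * R)"
  define W where "W = transpose_mat R * N - transpose_mat r * n"
  have RG: "rgrad d K Q lam a X = Q * (2 \<cdot>\<^sub>m N - R * W) + v * ((-2) \<cdot>\<^sub>m n - r * W)"
    unfolding W_def N_def n_def C_def L_def A_def by (rule rgrad_struct[OF Q v Rd rd QtQ Qtv vtv lam Xd])
  have Ld: "dim_row L = K" "dim_col L = K" and Ad: "dim_row A = K" "dim_col A = K"
    unfolding L_def A_def by simp_all
  have Cd: "dim_row C = K" "dim_col C = K" unfolding C_def using Ad Ld Rd by simp_all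
  have Nd: "dim_row N = K" "dim_col N = K" unfolding N_def using Ld Rd Ad Cd by simp_all
  have n0: "n = 0\<^sub>m 1 K" unfolding n_def r_def using Cd Rd by (simp add: mzero_l)
  have W0: "W = transpose_mat R * N" unfolding W_def n0 r_def using Rd Nd by (intro eq_matI) simp_all
  have N'e: "2 \<cdot>\<^sub>m N - R * W = N"
  proof -
    have "R * W = (R * transpose_mat R) * N" unfolding W0 using Rd Nd by (simp add: massoc)
    then have "R * W = N" unfolding RRt using Nd by simp
    then show ?thesis using Nd by (intro eq_matI) simp_all
  qed
  have n'e: "(-2) \<cdot>\<^sub>m n - r * W = 0\<^sub>m 1 K" unfolding n0 r_def W0 using Rd Nd by (intro eq_matI) simp_all
  have f1: "(frob (rgrad d K Q lam a X))\<^sup>2 = (frob N)\<^sup>2"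
  proof -
    have "(frob (rgrad d K Q lam a X))\<^sup>2 = (frob N)\<^sup>2 + (frob (0\<^sub>m 1 K :: real mat))\<^sup>2"
      unfolding RG N'e n'e by (rule frob_orth[OF Q v Nd _ _ QtQ Qtv vtv]) simp_all
    also have "(frob (0\<^sub>m 1 K :: real mat))\<^sup>2 = 0" unfolding frob_sq by simp
    finally show ?thesis by simp
  qed
  define S where "S = transpose_mat R * L * R"
  have Sd: "dim_row S = K" "dim_col S = K" unfolding S_def using Rd Ld by simp_all
  have RtN: "transpose_mat R * N = S * A - A * S"
  proof -
    have "transpose_mat R * N = transpose_mat R * (L * R * A) - transpose_mat R * (R * (C * R))"
      unfolding N_def using Rd Ld Ad Cd by (subst mdistl_minus) simp_all
    also have "transpose_mat R * (L * R * A) = S * A" unfolding S_def using Rd Ld Ad by (simp add: massoc)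
    also have "transpose_mat R * (R * (C * R)) = (transpose_mat R * R) * (C * R)" using Rd Cd by (simp add: massoc)
    also have "\<dots> = A * S" unfolding RtR C_def S_def using Rd Ld Ad by (simp add: massoc)
    finally show ?thesis .
  qed
  have fN: "frob N = frob (transpose_mat R * N)"
  proof -
    have "R * (transpose_mat R * N) = N" using Rd Nd by (simp add: massoc[symmetric] RRt)
    then show ?thesis using frob_isom[OF Rd _ RtR, of "transpose_mat R * N"] Rd by simp
  qed
  have Sent: "S $$ (i, k) = (\<Sum>p<K. rot j c s p i * lam p * rot j c s p k)" if "i < K" "k < K" for i k
  proof -
    have RL: "transpose_mat R * L = mat K K (\<lambda>(i, p). transpose_mat R $$ (i, p) * lam p)"
      unfolding L_def by (rule mat_diag_mult_right[OF cm]) (simp_all add: Rd)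
    have "S $$ (i, k) = (\<Sum>p<K. (transpose_mat R * L) $$ (i, p) * R $$ (p, k))"
      unfolding S_def using that Rd Ld by (subst mult_entry') simp_all
    also have "\<dots> = (\<Sum>p<K. rot j c s p i * lam p * rot j c s p k)"
      unfolding RL by (rule sum.cong) (use that in \<open>simp_all add: R_def\<close>)
    finally show ?thesis .
  qed
  define \<sigma> where "\<sigma> = - (c * s * (lam j - lam (Suc j)))"
  have Soff: "S $$ (i, k) = (if (i = j \<and> k = Suc j) \<or> (i = Suc j \<and> k = j) then \<sigma> else 0)"
    if "i < K" "k < K" "i \<noteq> k" for i k
    unfolding Sent[OF that(1,2)] \<sigma>_def by (rule rot_S[OF j that])
  have SAe: "(S * A - A * S) $$ (i, k) = S $$ (i, k) * a k - a i * S $$ (i, k)" if "i < K" "k < K" for i k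
  proof -
    have SA: "S * A = mat K K (\<lambda>(i, k). S $$ (i, k) * a k)"
      unfolding A_def by (rule mat_diag_mult_right[OF cm[OF Sd]])
    have AS: "A * S = mat K K (\<lambda>(i, k). a i * S $$ (i, k))"
      unfolding A_def by (rule mat_diag_mult_left[OF cm[OF Sd]])
    show ?thesis unfolding SA AS using that by simp
  qed
  define g where "g i k = (S $$ (i, k) * a k - a i * S $$ (i, k))\<^sup>2" for i k
  have g0: "g i k = 0" if "i < K" "k < K" "\<not> ((i = j \<and> k = Suc j) \<or> (i = Suc j \<and> k = j))" for i k
  proof (cases "i = k")
    case True then show ?thesis unfolding g_def by simp
  next
    case False then show ?thesis unfolding g_def using Soff[OF that(1,2) False] that(3) by simp
  qed
  have "(frob (S * A - A * S))\<^sup>2 = (\<Sum>i<K. \<Sum>k<K. g i k)"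
  proof -
    have dd: "dim_row (S * A - A * S) = K" "dim_col (S * A - A * S) = K" using Sd Ad by simp_all
    show ?thesis unfolding frob_sq dd g_def by (intro sum.cong refl) (simp only: lessThan_iff SAe)
  qed
  also have "\<dots> = (if j = j \<or> j = Suc j then 0 else (\<Sum>k<K. g j k)) + (\<Sum>k<K. g j k) + (\<Sum>k<K. g (Suc j) k)"
    by (rule sum3[OF j]) (use j in \<open>auto intro!: sum.neutral simp: g0\<close>)
  also have "\<dots> = g j (Suc j) + g (Suc j) j"
  proof -
    have "(\<Sum>k<K. g j k) = g j (Suc j)" by (rule sum_single) (use j in \<open>auto simp: g0\<close>)
    moreover have "(\<Sum>k<K. g (Suc j) k) = g (Suc j) j" by (rule sum_single) (use j in \<open>auto simp: g0\<close>)
    ultimately show ?thesis by simp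
  qed
  also have "\<dots> = 2 * (c * s * (lam j - lam (Suc j)) * (a j - a (Suc j)))\<^sup>2"
  proof -
    have s1: "S $$ (j, Suc j) = \<sigma>" using Soff[of j "Suc j"] j by simp
    have s2: "S $$ (Suc j, j) = \<sigma>" using Soff[of "Suc j" j] j by simp
    show ?thesis unfolding g_def s1 s2 \<sigma>_def by (simp add: power2_eq_square algebra_simps)
  qed
  finally have "(frob (S * A - A * S))\<^sup>2 = 2 * (c * s * (lam j - lam (Suc j)) * (a j - a (Suc j)))\<^sup>2" .
  then show "(frob (rgrad d K Q lam a X))\<^sup>2 = 2 * (c * s * (lam j - lam (Suc j)) * (a j - a (Suc j)))\<^sup>2"
    unfolding f1 fN RtN .
qed

lemma dF_nonneg: "0 \<le> dF K X Q"
proof -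
  let ?f = "\<lambda>q. frob (X - Q * mat_diag K (\<lambda>i. q ! i))"
  let ?L = "{q. set q \<subseteq> {1, -1::real} \<and> length q = K}"
  have S: "{frob (X - Q * mat_diag K (\<lambda>i. q ! i)) | q. q \<in> lists {1, -1} \<and> length q = K} = ?f ` ?L"
    by (auto simp: in_lists_conv_set)
  have fin: "finite (?f ` ?L)" using finite_lists_length_eq[of "{1, -1::real}" K] by simp
  have ne: "replicate K 1 \<in> ?L" by auto
  have "Min (?f ` ?L) \<in> ?f ` ?L" using fin ne by (intro Min_in) auto
  then show ?thesis unfolding dF_def S using frob_nonneg by auto
qed

lemma cs_ineq:
  fixes c s :: real
  assumes "0 \<le> c" "c \<le> 1" "c\<^sup>2 + s\<^sup>2 = 1"
  shows "c\<^sup>2 * s\<^sup>2 \<le> 2 - 2 * c"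
proof -
  have "c\<^sup>2 \<le> 1" using assms by (simp add: power_le_one)
  moreover have "1 + c \<le> 2" using assms by simp
  ultimately have h: "c\<^sup>2 * (1 + c) \<le> 1 * 2" using assms(1) by (intro mult_mono) auto
  have "0 \<le> (1 - c) * (2 - c\<^sup>2 * (1 + c))" using h assms by (intro mult_nonneg_nonneg) auto
  moreover have "2 - 2 * c - c\<^sup>2 * s\<^sup>2 = (1 - c) * (2 - c\<^sup>2 * (1 + c))"
  proof -
    have e: "s\<^sup>2 = 1 - c\<^sup>2" using assms by simp
    show ?thesis unfolding e by (simp add: power2_eq_square algebra_simps)
  qed
  ultimately show ?thesis by linarith
qed

theorem lemma6:
  fixes d K :: nat and Q :: "real mat" and lam a :: "nat \<Rightarrow> real"
    and \<delta>3 \<eta> :: real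
  assumes "1 \<le> K" and "K < d"
    and "Q \<in> stiefel d K"
    and "\<forall>i j. i < j \<and> j < K \<longrightarrow> lam j < lam i"
    and "\<forall>i<K. 0 < lam i"
    and "\<forall>i j. i < j \<and> j < K \<longrightarrow> a j < a i"
    and "\<forall>i<K. 0 < a i"
    and "0 < \<delta>3" and "\<delta>3 < sqrt 2 / 2"
    and "0 < \<eta>"
    and "\<forall>X\<in>stiefel d K. dF K X Q \<le> \<delta>3 \<longrightarrow>
           dF K X Q \<le> \<eta> * frob (rgrad d K Q lam a X)"
  shows "\<exists>\<beta>1. 0 < \<beta>1 \<and> \<beta>1 < 2/3 * \<delta>3 \<and>
           (\<forall>X\<in>stiefel d K. dF K X Q \<le> \<beta>1 \<longrightarrow>
              gfun K Q lam a Q - gfun K Q lam a X \<ge> 1 / (4 * \<eta>) * (dF K X Q)\<^sup>2)"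
proof -
  note K = assms(1) and Kd = assms(2) and Qst = assms(3) and lamdec = assms(4) and lampos = assms(5)
    and adec = assms(6) and apos = assms(7) and d0 = assms(8) and d1 = assms(9) and eta = assms(10)
    and hyp = assms(11)
  have QQ: "dim_row Q = d" "dim_col Q = K" "transpose_mat Q * Q = 1\<^sub>m K" using stiefelD[OF Qst] by auto
  obtain v where v: "dim_row v = d" "dim_col v = 1" and Qtv: "transpose_mat Q * v = 0\<^sub>m K 1"
    and vtv: "transpose_mat v * v = 1\<^sub>m 1"
    using exists_v[OF QQ Kd] by blast
  define u where "u = \<delta>3 / 3"
  have u0: "0 < u" unfolding u_def using d0 by simp
  have s2: "sqrt 2 < 2" by (rule power2_less_imp_less) simp_all
  have d1': "\<delta>3 < 1" using d1 s2 by simp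
  have u1: "u < 1" unfolding u_def using d1' by simp
  define c where "c = (1 - u\<^sup>2) / (1 + u\<^sup>2)"
  define s where "s = 2 * u / (1 + u\<^sup>2)"
  have pu: "0 < 1 + u\<^sup>2" by (simp add: add_pos_nonneg)
  have "u * u < 1 * 1" using u0 u1 by (intro mult_strict_mono) auto
  then have u2: "u\<^sup>2 < 1" by (simp add: power2_eq_square)
  have c0: "0 < c" unfolding c_def using u2 pu by simp
  have c1: "c \<le> 1" unfolding c_def using pu by (simp add: divide_le_eq_1)
  have s0: "0 < s" unfolding s_def using u0 pu by simp
  have cs: "c\<^sup>2 + s\<^sup>2 = 1"
  proof -
    have "(1 - u\<^sup>2)\<^sup>2 + (2 * u)\<^sup>2 = (1 + u\<^sup>2)\<^sup>2" by (simp add: power2_eq_square algebra_simps)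
    then show ?thesis unfolding c_def s_def using pu by (simp add: power_divide field_simps)
  qed
  have omc: "1 - c = 2 * u\<^sup>2 / (1 + u\<^sup>2)" unfolding c_def using pu by (simp add: field_simps)
  have omc_le: "1 - c \<le> 2 * u\<^sup>2" unfolding omc using pu
    by (simp add: divide_le_eq mult_le_cancel_left1 algebra_simps) 
  have u9: "9 * u\<^sup>2 = \<delta>3\<^sup>2" unfolding u_def by (simp add: power2_eq_square)
  have dfle: "dF K X Q \<le> \<delta>3" if "(dF K X Q)\<^sup>2 \<le> \<delta>3\<^sup>2" for X
    by (rule power2_le_imp_le[OF that]) (use d0 in simp)
  define X1 where "X1 = Q * mat_diag K (\<lambda>k. if k = K - 1 then c else 1) + v * mat 1 K (\<lambda>(_, k). if k = K - 1 then s else 0)"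
  have X1st: "X1 \<in> stiefel d K" and X1d: "(dF K X1 Q)\<^sup>2 = 2 - 2 * c"
    and X1g: "(frob (rgrad d K Q lam a X1))\<^sup>2 = (2 * a (K - 1) * lam (K - 1) * c * s)\<^sup>2"
    unfolding X1_def using drop_test[OF K QQ(1,2) v QQ(3) Qtv vtv lampos cs] c0 s0 by auto
  have hK: "1 \<le> 2 * \<eta> * (a (K - 1) * lam (K - 1))"
  proof -
    have "(dF K X1 Q)\<^sup>2 \<le> \<delta>3\<^sup>2" unfolding X1d using omc_le u9 zero_le_power2[of u] by linarith
    then have "dF K X1 Q \<le> \<eta> * frob (rgrad d K Q lam a X1)" using hyp X1st dfle by blast
    then have "(dF K X1 Q)\<^sup>2 \<le> (\<eta> * frob (rgrad d K Q lam a X1))\<^sup>2"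
      using dF_nonneg by (rule power_mono)
    also have "\<dots> = \<eta>\<^sup>2 * (2 * a (K - 1) * lam (K - 1) * c * s)\<^sup>2" by (simp add: power_mult_distrib X1g)
    finally have h1: "2 - 2 * c \<le> \<eta>\<^sup>2 * (2 * a (K - 1) * lam (K - 1) * c * s)\<^sup>2" unfolding X1d .
    have h2: "c\<^sup>2 * s\<^sup>2 \<le> 2 - 2 * c" by (rule cs_ineq) (use c0 c1 cs in auto)
    have "c\<^sup>2 * s\<^sup>2 * 1 \<le> c\<^sup>2 * s\<^sup>2 * (2 * \<eta> * (a (K - 1) * lam (K - 1)))\<^sup>2"
      using h1 h2 by (simp add: power_mult_distrib algebra_simps)
    then have "1 \<le> (2 * \<eta> * (a (K - 1) * lam (K - 1)))\<^sup>2"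
      using c0 s0 by (subst (asm) mult_le_cancel_left_pos) auto
    moreover have "0 \<le> 2 * \<eta> * (a (K - 1) * lam (K - 1))"
    proof -
      have "0 < a (K - 1)" "0 < lam (K - 1)" using apos lampos K by simp_all
      then show ?thesis using eta by simp
    qed
    ultimately show ?thesis using power2_le_imp_le[of 1 "2 * \<eta> * (a (K - 1) * lam (K - 1))"] by simp
  qed
  have hD: "\<forall>j. j + 1 < K \<longrightarrow> 1 \<le> \<eta> * ((a j - a (j + 1)) * (lam j - lam (j + 1)))"
  proof (intro allI impI)
    fix j assume jK: "j + 1 < K"
    then have j: "Suc j < K" by simp
    define X2 where "X2 = Q * mat K K (\<lambda>(p, k). rot j c s p k) + v * 0\<^sub>m 1 K"
    have X2st: "X2 \<in> stiefel d K" and X2d: "(dF K X2 Q)\<^sup>2 = 4 - 4 * c"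
      and X2g: "(frob (rgrad d K Q lam a X2))\<^sup>2 = 2 * (c * s * (lam j - lam (Suc j)) * (a j - a (Suc j)))\<^sup>2"
      unfolding X2_def using rot_test[OF j QQ(1,2) v QQ(3) Qtv vtv lampos cs] c0 by auto
    have "(dF K X2 Q)\<^sup>2 \<le> \<delta>3\<^sup>2" unfolding X2d using omc_le u9 zero_le_power2[of u] by linarith
    then have "dF K X2 Q \<le> \<eta> * frob (rgrad d K Q lam a X2)" using hyp X2st dfle by blast
    then have "(dF K X2 Q)\<^sup>2 \<le> (\<eta> * frob (rgrad d K Q lam a X2))\<^sup>2"
      using dF_nonneg by (rule power_mono)
    also have "\<dots> = \<eta>\<^sup>2 * (2 * (c * s * (lam j - lam (Suc j)) * (a j - a (Suc j)))\<^sup>2)" by (simp add: power_mult_distrib X2g)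
    finally have h1: "4 - 4 * c \<le> \<eta>\<^sup>2 * (2 * (c * s * (lam j - lam (Suc j)) * (a j - a (Suc j)))\<^sup>2)" unfolding X2d .
    have h2: "c\<^sup>2 * s\<^sup>2 \<le> 2 - 2 * c" by (rule cs_ineq) (use c0 c1 cs in auto)
    define D where "D = (a j - a (j + 1)) * (lam j - lam (j + 1))"
    have e: "\<eta>\<^sup>2 * (2 * (c * s * (lam j - lam (Suc j)) * (a j - a (Suc j)))\<^sup>2) = 2 * (c\<^sup>2 * s\<^sup>2 * (\<eta> * D)\<^sup>2)"
      unfolding D_def by (simp add: power2_eq_square algebra_simps)
    have "c\<^sup>2 * s\<^sup>2 * 1 \<le> c\<^sup>2 * s\<^sup>2 * (\<eta> * D)\<^sup>2"
      using h1 h2 unfolding e by linarith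
    then have "1 \<le> (\<eta> * D)\<^sup>2"
      using c0 s0 by (subst (asm) mult_le_cancel_left_pos) auto
    moreover have "0 \<le> \<eta> * D" unfolding D_def using eta adec lamdec jK
      by (intro mult_nonneg_nonneg) (auto simp: less_imp_le)
    ultimately show "1 \<le> \<eta> * ((a j - a (j + 1)) * (lam j - lam (j + 1)))"
      using power2_le_imp_le[of 1 "\<eta> * D"] unfolding D_def by simp
  qed
  show ?thesis
  proof (intro exI conjI ballI impI)
    show "0 < \<delta>3 / 3" using d0 by simp
    show "\<delta>3 / 3 < 2 / 3 * \<delta>3" using d0 by simp
    fix X assume X: "X \<in> stiefel d K" and "dF K X Q \<le> \<delta>3 / 3"
    show "1 / (4 * \<eta>) * (dF K X Q)\<^sup>2 \<le> gfun K Q lam a Q - gfun K Q lam a X"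
      by (rule qg[OF K Qst X lamdec lampos adec apos eta hK hD])
  qed
qed

end
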